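(* $\mathbf{DSPACE(n)}\subseteq \mathbf{AM}_{\textnormal{q}}^{=1}$ \textnormal{(2ADfA)}. Moreover, suppose language $L$ can be recognized by a DTM that runs in linear space and time $O \left( t(|w|)\right)$ on given input $w$. Then $L$ can be strongly verified by a rational-valued 2ADfA with expected running time $O\left(|w|t(|w|)\right)$.
   Context: An affine state of an $m$-state affine register is a vector $v\in\mathbb{R}^m$ whose entries sum to $1$; affine operators are real matrices whose columns each sum to $1$; weighting observes basis state $e_j$ with probability $|v_j|/\|v\|_1$. A 2ADfA is a two-way deterministic finite automaton on the read-only input $¢ w\$$ (left end-marker ¢, right end-marker \$) equipped with finitely many affine registers, each updated by an affine operator or weighted at each step, with the deterministic state and head move then depending on state, symbol and weighting outcomes; it halts upon entering an accepting or rejecting state. Rational-valued means all affine operators have rational entries. The 2ADfA is the verifier in an Arthur–Merlin proof system (public coins: deterministic states, head moves and weighting outcomes are revealed to the all-powerful prover). Strong verification with error $\epsilon<1/2$: there is a prover such that every $w\in L$ is accepted with probability at least $1-\epsilon$, and for every $w\notin L$ and every prover, $w$ is rejected with probability at least $1-\epsilon$. $\mathbf{AM}_{\textnormal{q}}^{=1}(\text{2ADfA})$ is the class of languages strongly verifiable by such AM systems with rational-valued 2ADfA verifiers with bounded error and perfect completeness (members accepted with probability $1$). DTM denotes a deterministic Turing machine. *)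

theory Defs
  imports Complex_Main
begin

text \<open>States and tape symbols are natural numbers below given bounds; tape symbol 0 is the blank.\<close>

record 'a dtm =
  tm_nst   :: nat
  tm_nsym  :: nat
  tm_q0    :: nat
  tm_acc   :: nat
  tm_rej   :: nat
  tm_delta :: "nat \<Rightarrow> nat \<Rightarrow> nat \<times> nat \<times> int"
  tm_enc   :: "'a \<Rightarrow> nat"

definition wf_dtm :: "'a dtm \<Rightarrow> bool" where
  "wf_dtm M \<longleftrightarrow>
     tm_q0 M < tm_nst M \<and> tm_acc M < tm_nst M \<and> tm_rej M < tm_nst M \<and> tm_acc M \<noteq> tm_rej M \<and>
     inj (tm_enc M) \<and> (\<forall>x. 0 < tm_enc M x \<and> tm_enc M x < tm_nsym M) \<and>
     (\<forall>q < tm_nst M. \<forall>s < tm_nsym M.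
        (case tm_delta M q s of (q', s', d) \<Rightarrow> q' < tm_nst M \<and> s' < tm_nsym M \<and> d \<in> {-1, 0, 1}))"

type_synonym tm_conf = "nat \<times> (int \<Rightarrow> nat) \<times> int"

definition tm_step :: "'a dtm \<Rightarrow> tm_conf \<Rightarrow> tm_conf" where
  "tm_step M cf = (case cf of (q, T, h) \<Rightarrow>
     if q = tm_acc M \<or> q = tm_rej M then (q, T, h)
     else (case tm_delta M q (T h) of (q', s', d) \<Rightarrow> (q', T(h := s'), h + d)))"

definition tm_init :: "'a dtm \<Rightarrow> 'a list \<Rightarrow> tm_conf" where
  "tm_init M w = (tm_q0 M,
     (\<lambda>i. if 0 \<le> i \<and> i < int (length w) then tm_enc M (w ! nat i) else 0), 0)"

definition tm_conf :: "'a dtm \<Rightarrow> 'a list \<Rightarrow> nat \<Rightarrow> tm_conf" where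
  "tm_conf M w n = (tm_step M ^^ n) (tm_init M w)"

definition tm_halted :: "'a dtm \<Rightarrow> 'a list \<Rightarrow> nat \<Rightarrow> bool" where
  "tm_halted M w n \<longleftrightarrow> fst (tm_conf M w n) \<in> {tm_acc M, tm_rej M}"

definition tm_decides :: "'a dtm \<Rightarrow> 'a list set \<Rightarrow> bool" where
  "tm_decides M L \<longleftrightarrow>
     (\<forall>w. \<exists>n. tm_halted M w n \<and> (fst (tm_conf M w n) = tm_acc M \<longleftrightarrow> w \<in> L))"

definition tm_time :: "'a dtm \<Rightarrow> 'a list \<Rightarrow> nat" where
  "tm_time M w = (LEAST n. tm_halted M w n)"

definition tm_linear_space :: "'a dtm \<Rightarrow> bool" where
  "tm_linear_space M \<longleftrightarrow> (\<exists>c::nat. \<forall>w n.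
     \<bar>snd (snd (tm_conf M w n))\<bar> \<le> int c * (int (length w) + 1))"

definition DSPACE_lin :: "'a list set set" where
  "DSPACE_lin = {L. \<exists>M. wf_dtm M \<and> tm_decides M L \<and> tm_linear_space M}"

datatype 'a tape_sym = LEnd | Sym 'a | REnd

definition tape_at :: "'a list \<Rightarrow> nat \<Rightarrow> 'a tape_sym" where
  "tape_at w p = (if p = 0 then LEnd else if p \<le> length w then Sym (w ! (p - 1)) else REnd)"

text \<open>In state q, reading input symbol a and prover
  message c, register i is updated by the affine matrix A (v_act ... = Some A, A row col)
  or weighted (v_act ... = None).  Then new state and head move are given by v_trans
  from q, a, c and the vector oc of weighting outcomes.\<close>

record 'a verifier =
  v_nst   :: nat
  v_nmsg  :: nat
  v_q0    :: nat
  v_acc   :: "nat set"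
  v_rej   :: "nat set"
  v_nreg  :: nat
  v_rdim  :: "nat \<Rightarrow> nat"
  v_act   :: "nat \<Rightarrow> 'a tape_sym \<Rightarrow> nat \<Rightarrow> nat \<Rightarrow> (nat \<Rightarrow> nat \<Rightarrow> real) option"
  v_trans :: "nat \<Rightarrow> 'a tape_sym \<Rightarrow> nat \<Rightarrow> (nat \<Rightarrow> nat) \<Rightarrow> nat \<times> int"

definition wf_verifier :: "'a verifier \<Rightarrow> bool" where
  "wf_verifier V \<longleftrightarrow>
     v_q0 V < v_nst V \<and> v_acc V \<subseteq> {..<v_nst V} \<and> v_rej V \<subseteq> {..<v_nst V} \<and>
     v_acc V \<inter> v_rej V = {} \<and>
     (\<forall>i < v_nreg V. 1 \<le> v_rdim V i) \<and>
     (\<forall>q < v_nst V. \<forall>a. \<forall>c < v_nmsg V. \<forall>i < v_nreg V. \<forall>A.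
        v_act V q a c i = Some A \<longrightarrow> (\<forall>k < v_rdim V i. (\<Sum>r<v_rdim V i. A r k) = 1)) \<and>
     (\<forall>q < v_nst V. \<forall>a. \<forall>c < v_nmsg V. \<forall>oc.
        (case v_trans V q a c oc of (q', d) \<Rightarrow>
           q' < v_nst V \<and> d \<in> {-1, 0, 1} \<and> (a = LEnd \<longrightarrow> d \<noteq> -1) \<and> (a = REnd \<longrightarrow> d \<noteq> 1)))"

definition rational_verifier :: "'a verifier \<Rightarrow> bool" where
  "rational_verifier V \<longleftrightarrow>
     (\<forall>q a c i A. v_act V q a c i = Some A \<longrightarrow>
        (\<forall>r < v_rdim V i. \<forall>k < v_rdim V i. A r k \<in> \<rat>))"

text \<open>Public history: the list of (prover message, weighting outcomes) of all past steps;
  together with the input it determines all states and head positions.\<close>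
type_synonym hist = "(nat \<times> (nat \<Rightarrow> nat)) list"
type_synonym 'a prover = "'a list \<Rightarrow> hist \<Rightarrow> nat"
type_synonym vconf = "nat \<times> nat \<times> (nat \<Rightarrow> nat \<Rightarrow> real) \<times> hist"

definition valid_prover :: "'a verifier \<Rightarrow> 'a prover \<Rightarrow> bool" where
  "valid_prover V P \<longleftrightarrow> (\<forall>w h. P w h < v_nmsg V)"

definition weighed :: "'a verifier \<Rightarrow> nat \<Rightarrow> 'a tape_sym \<Rightarrow> nat \<Rightarrow> nat \<Rightarrow> bool" where
  "weighed V q a c i \<longleftrightarrow> i < v_nreg V \<and> v_act V q a c i = None"

definition outs :: "'a verifier \<Rightarrow> nat \<Rightarrow> 'a tape_sym \<Rightarrow> nat \<Rightarrow> (nat \<Rightarrow> nat) set" where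
  "outs V q a c = {oc. \<forall>i. (if weighed V q a c i then oc i < v_rdim V i else oc i = 0)}"

definition oprob :: "'a verifier \<Rightarrow> nat \<Rightarrow> 'a tape_sym \<Rightarrow> nat \<Rightarrow> (nat \<Rightarrow> nat \<Rightarrow> real)
    \<Rightarrow> (nat \<Rightarrow> nat) \<Rightarrow> real" where
  "oprob V q a c R oc = (\<Prod>i\<in>{i. weighed V q a c i}.
      \<bar>R i (oc i)\<bar> / (\<Sum>j<v_rdim V i. \<bar>R i j\<bar>))"

definition vstep :: "'a verifier \<Rightarrow> nat \<Rightarrow> 'a tape_sym \<Rightarrow> nat \<Rightarrow> (nat \<Rightarrow> nat \<Rightarrow> real)
    \<Rightarrow> (nat \<Rightarrow> nat) \<Rightarrow> (nat \<Rightarrow> nat \<Rightarrow> real)" where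
  "vstep V q a c R oc = (\<lambda>i. if i < v_nreg V then
       (case v_act V q a c i of
          None \<Rightarrow> (\<lambda>j. if j = oc i then 1 else 0)
        | Some A \<Rightarrow> (\<lambda>r. \<Sum>k<v_rdim V i. A r k * R i k))
     else R i)"



fun reach :: "'a verifier \<Rightarrow> nat set \<Rightarrow> 'a prover \<Rightarrow> 'a list \<Rightarrow> nat \<Rightarrow> vconf \<Rightarrow> real" where
  "reach V S P w 0 (q, p, R, h) = (if q \<in> S then 1 else 0)"
| "reach V S P w (Suc n) (q, p, R, h) =
     (if q \<in> S then 1 else if q \<in> v_acc V \<union> v_rej V then 0 else
      (let a = tape_at w p; c = P w h in
       \<Sum>oc\<in>outs V q a c. oprob V q a c R oc *
          reach V S P w n (fst (v_trans V q a c oc), nat (int p + snd (v_trans V q a c oc)),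
                           vstep V q a c R oc, h @ [(c, oc)])))"

definition start :: "'a verifier \<Rightarrow> vconf" where
  "start V = (v_q0 V, 0, (\<lambda>i j. if j = 0 then 1 else 0), [])"

definition acc_prob :: "'a verifier \<Rightarrow> 'a prover \<Rightarrow> 'a list \<Rightarrow> real" where
  "acc_prob V P w = (SUP n. reach V (v_acc V) P w n (start V))"

definition rej_prob :: "'a verifier \<Rightarrow> 'a prover \<Rightarrow> 'a list \<Rightarrow> real" where
  "rej_prob V P w = (SUP n. reach V (v_rej V) P w n (start V))"

text \<open>Expected running time: sum over n of Pr[not halted within n steps]; finite iff summable.\<close>
definition exp_time_le :: "'a verifier \<Rightarrow> 'a prover \<Rightarrow> 'a list \<Rightarrow> real \<Rightarrow> bool" where
  "exp_time_le V P w B \<longleftrightarrow>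
     (let f = (\<lambda>n. 1 - (reach V (v_acc V) P w n (start V) + reach V (v_rej V) P w n (start V)))
      in summable f \<and> suminf f \<le> B)"

definition sound :: "'a verifier \<Rightarrow> 'a list set \<Rightarrow> real \<Rightarrow> bool" where
  "sound V L \<epsilon> \<longleftrightarrow> (\<forall>w. w \<notin> L \<longrightarrow> (\<forall>P. valid_prover V P \<longrightarrow> rej_prob V P w \<ge> 1 - \<epsilon>))"

definition AM_q_1_2ADfA :: "'a list set set" where
  "AM_q_1_2ADfA = {L. \<exists>V \<epsilon>. wf_verifier V \<and> rational_verifier V \<and> \<epsilon> < 1/2 \<and>
      (\<exists>P. valid_prover V P \<and> (\<forall>w\<in>L. acc_prob V P w = 1)) \<and> sound V L \<epsilon>}"

end

theory Submission
  imports Defs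
begin

lemma reach_nonneg: "0 \<le> reach V S P w n c"
proof (induction n arbitrary: c)
  case 0
  then show ?case by (cases c) auto
next
  case (Suc n)
  obtain q p R h where c: "c = (q,p,R,h)" by (cases c)
  show ?case unfolding c
    by (auto simp: Let_def oprob_def intro!: sum_nonneg mult_nonneg_nonneg prod_nonneg divide_nonneg_nonneg Suc.IH)
qed

definition hs :: "'a verifier \<Rightarrow> nat set \<Rightarrow> bool" where
  "hs V S \<longleftrightarrow> S = v_acc V \<or> S = v_rej V"

definition dlink :: "'a verifier \<Rightarrow> 'a prover \<Rightarrow> 'a list \<Rightarrow> vconf \<Rightarrow> vconf \<Rightarrow> bool" where
  "dlink V P w c c' \<longleftrightarrow> fst c \<notin> v_acc V \<union> v_rej V \<and>
     (\<forall>S m. hs V S \<longrightarrow> reach V S P w (Suc m) c = reach V S P w m c')"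

inductive dpath :: "'a verifier \<Rightarrow> 'a prover \<Rightarrow> 'a list \<Rightarrow> nat \<Rightarrow> vconf \<Rightarrow> vconf \<Rightarrow> bool"
  for V P w where
  dp0: "dpath V P w 0 c c"
| dpS: "dlink V P w c c1 \<Longrightarrow> dpath V P w n c1 c2 \<Longrightarrow> dpath V P w (Suc n) c c2"

lemma dpath_trans: "dpath V P w n c1 c2 \<Longrightarrow> dpath V P w m c2 c3 \<Longrightarrow> dpath V P w (n+m) c1 c3"
  by (induction rule: dpath.induct) (auto intro: dpath.intros)

lemma dpath_one: "dlink V P w c c' \<Longrightarrow> dpath V P w 1 c c'"
  using dpS[OF _ dp0] by simp

lemma dpath_reach: "dpath V P w n c c' \<Longrightarrow> hs V S \<Longrightarrow> reach V S P w (m + n) c = reach V S P w m c'"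
proof (induction arbitrary: m rule: dpath.induct)
  case (dp0 c) then show ?case by simp
next
  case (dpS c c1 n c2)
  have "reach V S P w (m + Suc n) c = reach V S P w (Suc (m + n)) c" by simp
  also have "\<dots> = reach V S P w (m+n) c1" using dpS.hyps(1) dpS.prems unfolding dlink_def by blast
  finally show ?case using dpS.IH dpS.prems by simp
qed

lemma reach0_nothalt: "fst c \<notin> v_acc V \<union> v_rej V \<Longrightarrow> hs V S \<Longrightarrow> reach V S P w 0 c = 0"
  by (cases c) (auto simp: hs_def)

lemma dpath_reach_lt: "dpath V P w n c c' \<Longrightarrow> hs V S \<Longrightarrow> k < n \<Longrightarrow> reach V S P w k c = 0"
proof (induction arbitrary: k rule: dpath.induct)
  case (dp0 c) then show ?case by simp
next
  case (dpS c c1 n c2)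
  show ?case
  proof (cases k)
    case 0 then show ?thesis using dpS reach0_nothalt unfolding dlink_def by blast
  next
    case (Suc k')
    then have "reach V S P w k c = reach V S P w k' c1" using dpS.hyps(1) dpS.prems unfolding dlink_def by blast
    then show ?thesis using dpS.IH dpS.prems Suc by simp
  qed
qed

lemma tm_conf_0: "tm_conf M w 0 = tm_init M w" by (simp add: tm_conf_def)
lemma tm_conf_Suc: "tm_conf M w (Suc t) = tm_step M (tm_conf M w t)"
  by (simp add: tm_conf_def)

definition Qs :: "'a dtm \<Rightarrow> 'a list \<Rightarrow> nat \<Rightarrow> nat" where "Qs M w t = fst (tm_conf M w t)"
definition Ts :: "'a dtm \<Rightarrow> 'a list \<Rightarrow> nat \<Rightarrow> int \<Rightarrow> nat" where "Ts M w t = fst (snd (tm_conf M w t))"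
definition Hs :: "'a dtm \<Rightarrow> 'a list \<Rightarrow> nat \<Rightarrow> int" where "Hs M w t = snd (snd (tm_conf M w t))"

lemma tm_conf_split: "tm_conf M w t = (Qs M w t, Ts M w t, Hs M w t)"
  by (simp add: Qs_def Ts_def Hs_def)

lemma step_halt: "Qs M w t \<in> {tm_acc M, tm_rej M} \<Longrightarrow> tm_conf M w (Suc t) = tm_conf M w t"
  by (subst tm_conf_Suc, subst (1) tm_conf_split) (auto simp: tm_step_def tm_conf_split)

lemma step_nothalt:
  assumes "Qs M w t \<notin> {tm_acc M, tm_rej M}" "tm_delta M (Qs M w t) (Ts M w t (Hs M w t)) = (q', s', d)"
  shows "Qs M w (Suc t) = q'" "Ts M w (Suc t) = (Ts M w t)(Hs M w t := s')" "Hs M w (Suc t) = Hs M w t + d"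
proof -
  have "tm_conf M w (Suc t) = (q', (Ts M w t)(Hs M w t := s'), Hs M w t + d)"
    using assms by (simp add: tm_conf_Suc tm_conf_split[of M w t] tm_step_def)
  then show "Qs M w (Suc t) = q'" "Ts M w (Suc t) = (Ts M w t)(Hs M w t := s')" "Hs M w (Suc t) = Hs M w t + d"
    by (simp_all add: Qs_def Ts_def Hs_def)
qed

lemma halt_stays: assumes "Qs M w t \<in> {tm_acc M, tm_rej M}" "t \<le> t'" shows "tm_conf M w t' = tm_conf M w t"
  using assms(2)
proof (induction t' rule: dec_induct)
  case base then show ?case by simp
next
  case (step n)
  then have "Qs M w n = Qs M w t" by (simp add: Qs_def)
  then show ?case using step assms(1) step_halt[of M w n] by simp
qed

locale tmw = fixes M :: "'a dtm" assumes wfM: "wf_dtm M"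
begin

lemma enc_lt: "tm_enc M x < tm_nsym M" and enc_pos: "0 < tm_enc M x"
  using wfM unfolding wf_dtm_def by blast+

lemma q0_lt: "tm_q0 M < tm_nst M" using wfM unfolding wf_dtm_def by blast
lemma acc_ne_rej: "tm_acc M \<noteq> tm_rej M" using wfM unfolding wf_dtm_def by blast
lemma enc_inj: "inj (tm_enc M)" using wfM unfolding wf_dtm_def by blast

lemma delta_all: "\<forall>q < tm_nst M. \<forall>s < tm_nsym M.
        (case tm_delta M q s of (q', s', d) \<Rightarrow> q' < tm_nst M \<and> s' < tm_nsym M \<and> d \<in> {-1, 0, 1})"
  using wfM unfolding wf_dtm_def by (elim conjE) assumption

lemma delta_bounds:
  assumes "q < tm_nst M" "s < tm_nsym M" "tm_delta M q s = (q', s', d)"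
  shows "q' < tm_nst M" "s' < tm_nsym M" "d \<in> {-1,0,1}"
proof -
  have "case tm_delta M q s of (q', s', d) \<Rightarrow> q' < tm_nst M \<and> s' < tm_nsym M \<and> d \<in> {-1, 0, 1}"
    by (rule delta_all[rule_format, OF assms(1) assms(2)])
  then show "q' < tm_nst M" "s' < tm_nsym M" "d \<in> {-1,0,1}" using assms(3) by simp_all
qed

lemma nsym_ge2: "2 \<le> tm_nsym M"
  using enc_lt[of undefined] enc_pos[of undefined] by linarith

lemma init_vals: "Qs M w 0 = tm_q0 M" "Hs M w 0 = 0"
  "Ts M w 0 = (\<lambda>i. if 0 \<le> i \<and> i < int (length w) then tm_enc M (w ! nat i) else 0)"
  by (simp_all add: Qs_def Hs_def Ts_def tm_conf_0 tm_init_def)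
lemma bounds: "Qs M w t < tm_nst M \<and> (\<forall>j. Ts M w t j < tm_nsym M)"
proof (induction t)
  case 0
  then show ?case using q0_lt enc_lt nsym_ge2 by (auto simp: init_vals)
next
  case (Suc t)
  show ?case
  proof (cases "Qs M w t \<in> {tm_acc M, tm_rej M}")
    case True
    then show ?thesis using Suc step_halt[OF True] by (simp add: Qs_def Ts_def)
  next
    case False
    obtain q' s' d where dl: "tm_delta M (Qs M w t) (Ts M w t (Hs M w t)) = (q', s', d)" by (metis prod_cases3)
    from delta_bounds[OF _ _ dl] Suc step_nothalt[OF False dl] show ?thesis by auto
  qed
qed

lemma Qs_lt: "Qs M w t < tm_nst M" and Ts_lt: "Ts M w t j < tm_nsym M"
  using bounds by auto

lemma support:
  assumes lin: "\<forall>t. \<bar>Hs M w t\<bar> \<le> int c * (int (length w) + 1)"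
  shows "Ts M w t j \<noteq> 0 \<Longrightarrow> - (int c * (int (length w) + 1)) \<le> j \<and> j \<le> int c * (int (length w) + 1) + int (length w)"
proof (induction t)
  case 0
  have nn: "0 \<le> int c * (int (length w) + 1)" by simp
  have "0 \<le> j \<and> j < int (length w)" using 0 by (auto simp: init_vals split: if_splits)
  then show ?case using nn by linarith
next
  case (Suc t)
  show ?case
  proof (cases "Qs M w t \<in> {tm_acc M, tm_rej M}")
    case True
    then show ?thesis using Suc step_halt[OF True] by (simp add: Qs_def Ts_def)
  next
    case False
    note nh = False
    obtain q' s' d where dl: "tm_delta M (Qs M w t) (Ts M w t (Hs M w t)) = (q', s', d)" by (metis prod_cases3)
    have hb: "\<bar>Hs M w t\<bar> \<le> int c * (int (length w) + 1)" using lin by blast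
    show ?thesis
    proof (cases "j = Hs M w t")
      case True
      then show ?thesis using hb by auto
    next
      case False
      then have "Ts M w t j \<noteq> 0" using Suc.prems step_nothalt(2)[OF nh dl] by simp
      then show ?thesis using Suc.IH by blast
    qed
  qed
qed

end

definition Lnum :: "int \<Rightarrow> (int \<Rightarrow> nat) \<Rightarrow> int \<Rightarrow> nat \<Rightarrow> int" where
  "Lnum b T h m = (\<Sum>i<m. int (T (h - 1 - int i)) * b ^ i)"
definition Rnum :: "int \<Rightarrow> (int \<Rightarrow> nat) \<Rightarrow> int \<Rightarrow> nat \<Rightarrow> int" where
  "Rnum b T h m = (\<Sum>i<m. int (T (h + 1 + int i)) * b ^ i)"

lemma Lnum_top: "Lnum b T h (Suc m) = Lnum b T h m + int (T (h - 1 - int m)) * b ^ m"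
  by (simp add: Lnum_def)
lemma Rnum_top: "Rnum b T h (Suc m) = Rnum b T h m + int (T (h + 1 + int m)) * b ^ m"
  by (simp add: Rnum_def)

lemma Lnum_shift: "Lnum b T h (Suc m) = int (T (h - 1)) + b * Lnum b T (h - 1) m"
  unfolding Lnum_def sum.lessThan_Suc_shift
  by (simp add: sum_distrib_left algebra_simps)
lemma Rnum_shift: "Rnum b T h (Suc m) = int (T (h + 1)) + b * Rnum b T (h + 1) m"
  unfolding Rnum_def sum.lessThan_Suc_shift
  by (simp add: sum_distrib_left algebra_simps)

lemma Lnum_cong: "(\<And>i. i < m \<Longrightarrow> T (h - 1 - int i) = T' (h - 1 - int i)) \<Longrightarrow> Lnum b T h m = Lnum b T' h m"
  unfolding Lnum_def by (rule sum.cong) auto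
lemma Rnum_cong: "(\<And>i. i < m \<Longrightarrow> T (h + 1 + int i) = T' (h + 1 + int i)) \<Longrightarrow> Rnum b T h m = Rnum b T' h m"
  unfolding Rnum_def by (rule sum.cong) auto

lemma stepR_L: assumes "T (h - int (Suc m)) = 0"
  shows "Lnum b (T(h := s')) (h + 1) (Suc m) = int s' + b * Lnum b T h (Suc m)"
proof -
  have "Lnum b (T(h := s')) (h + 1) (Suc m) = int s' + b * Lnum b (T(h := s')) h m"
    by (simp add: Lnum_shift)
  also have "Lnum b (T(h := s')) h m = Lnum b T h m" by (rule Lnum_cong) auto
  also have "Lnum b T h m = Lnum b T h (Suc m)" using assms by (simp add: Lnum_top algebra_simps)
  finally show ?thesis .
qed

lemma stepR_R: assumes "T (h + 1 + int W) = 0"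
  shows "int (T (h + 1)) + b * Rnum b (T(h := s')) (h + 1) W = Rnum b T h W"
proof -
  have "Rnum b (T(h := s')) (h + 1) W = Rnum b T (h + 1) W" by (rule Rnum_cong) auto
  moreover have "Rnum b T h (Suc W) = int (T (h + 1)) + b * Rnum b T (h + 1) W" by (rule Rnum_shift)
  moreover have "Rnum b T h (Suc W) = Rnum b T h W" using assms by (simp add: Rnum_top)
  ultimately show ?thesis by simp
qed

lemma stepL_L: assumes "T (h - 1 - int W) = 0"
  shows "Lnum b T h W = int (T (h - 1)) + b * Lnum b (T(h := s')) (h - 1) W"
proof -
  have "Lnum b (T(h := s')) (h - 1) W = Lnum b T (h - 1) W" by (rule Lnum_cong) auto
  moreover have "Lnum b T h (Suc W) = int (T (h - 1)) + b * Lnum b T (h - 1) W" by (rule Lnum_shift)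
  moreover have "Lnum b T h (Suc W) = Lnum b T h W" using assms by (simp add: Lnum_top)
  ultimately show ?thesis by simp
qed

lemma stepL_R: assumes "T (h + int (Suc m)) = 0"
  shows "Rnum b (T(h := s')) (h - 1) (Suc m) = int s' + b * Rnum b T h (Suc m)"
proof -
  have "Rnum b (T(h := s')) (h - 1) (Suc m) = int s' + b * Rnum b (T(h := s')) h m"
    by (simp add: Rnum_shift)
  also have "Rnum b (T(h := s')) h m = Rnum b T h m" by (rule Rnum_cong) auto
  also have "Rnum b T h m = Rnum b T h (Suc m)" using assms by (simp add: Rnum_top algebra_simps)
  finally show ?thesis .
qed

lemma stepS_L: "Lnum b (T(h := s')) h W = Lnum b T h W" by (rule Lnum_cong) auto
lemma stepS_R: "Rnum b (T(h := s')) h W = Rnum b T h W" by (rule Rnum_cong) auto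

fun hor :: "int \<Rightarrow> (nat \<Rightarrow> int) \<Rightarrow> nat \<Rightarrow> int" where
  "hor b D 0 = 0"
| "hor b D (Suc m) = b * hor b D m + D m"

lemma hor_sum: "hor b D m = (\<Sum>i<m. D (m - 1 - i) * b ^ i)"
proof (induction m)
  case 0 then show ?case by simp
next
  case (Suc m)
  have "(\<Sum>i<Suc m. D (Suc m - 1 - i) * b ^ i) = D m + (\<Sum>i<m. D (m - 1 - i) * b ^ Suc i)"
    unfolding sum.lessThan_Suc_shift by simp
  also have "\<dots> = D m + b * (\<Sum>i<m. D (m - 1 - i) * b ^ i)"
    by (simp add: sum_distrib_left algebra_simps)
  finally show ?case using Suc by simp
qed

lemma hor_cong: "(\<And>j. j < m \<Longrightarrow> D j = D' j) \<Longrightarrow> hor b D m = hor b D' m"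
  by (induction m) auto

lemma hor_L: "hor b (\<lambda>j. int (T (h - int W + int j))) W = Lnum b T h W"
  unfolding hor_sum Lnum_def
  by (rule sum.cong) (auto simp: of_nat_diff algebra_simps)

lemma hor_R: "hor b (\<lambda>j. int (T (h + int W - int j))) W = Rnum b T h W"
  unfolding hor_sum Rnum_def
  by (rule sum.cong) (auto simp: of_nat_diff algebra_simps)

definition vecI :: "(nat \<Rightarrow> int) \<Rightarrow> nat \<Rightarrow> real" where
  "vecI x j = (if j = 0 then 1 - real_of_int (x 1 + x 2 + x 3 + x 4) else if j \<le> 4 then real_of_int (x j) else 0)"

definition affI :: "(nat \<Rightarrow> nat \<Rightarrow> int) \<Rightarrow> (nat \<Rightarrow> int) \<Rightarrow> nat \<Rightarrow> nat \<Rightarrow> int" where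
  "affI F G r k = (if k < 5 \<and> 1 \<le> r \<and> r \<le> 4 then G r + (if k = 0 then 0 else F r k)
     else if k < 5 \<and> r = 0 then 1 - (\<Sum>r'\<in>{1..4}. G r' + (if k = 0 then 0 else F r' k)) else 0)"

definition affM :: "(nat \<Rightarrow> nat \<Rightarrow> int) \<Rightarrow> (nat \<Rightarrow> int) \<Rightarrow> nat \<Rightarrow> nat \<Rightarrow> real" where
  "affM F G r k = real_of_int (affI F G r k)"

definition appA :: "(nat \<Rightarrow> nat \<Rightarrow> int) \<Rightarrow> (nat \<Rightarrow> int) \<Rightarrow> (nat \<Rightarrow> int) \<Rightarrow> nat \<Rightarrow> int" where
  "appA F G x r = (\<Sum>k\<in>{1..4}. F r k * x k) + G r"

lemma five: "{..<5::nat} = {0,1,2,3,4}" by auto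
lemma four: "{1..4::nat} = {1,2,3,4}" by auto

lemma affM_colsum: "k < 5 \<Longrightarrow> (\<Sum>r<5. affM F G r k) = 1"
  unfolding affM_def affI_def five four by simp

lemma affM_rat: "affM F G r k \<in> \<rat>"
  unfolding affM_def by simp

lemma affM_apply: "(\<lambda>r. \<Sum>k<5. affM F G r k * vecI x k) = vecI (appA F G x)"
proof
  fix r
  show "(\<Sum>k<5. affM F G r k * vecI x k) = vecI (appA F G x) r"
  proof (cases "r = 0")
    case True
    then show ?thesis unfolding affM_def affI_def five four vecI_def appA_def
      by (simp add: algebra_simps)
  next
    case False
    then consider "r = 1" | "r = 2" | "r = 3" | "r = 4" | "r > 4" by linarith
    then show ?thesis unfolding affM_def affI_def five four vecI_def appA_def
      by cases (simp_all add: algebra_simps)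
  qed
qed

lemma vecI_cong: "(\<And>j. 1 \<le> j \<Longrightarrow> j \<le> 4 \<Longrightarrow> x j = y j) \<Longrightarrow> vecI x = vecI y"
  unfolding vecI_def by (rule ext) (simp add: numeral_eq_Suc)

lemma vecI_cong4: "x 1 = y 1 \<Longrightarrow> x 2 = y 2 \<Longrightarrow> x 3 = y 3 \<Longrightarrow> x 4 = y 4 \<Longrightarrow> vecI x = vecI y"
proof (rule vecI_cong)
  fix j :: nat assume "1 \<le> j" "j \<le> 4" "x 1 = y 1" "x 2 = y 2" "x 3 = y 3" "x 4 = y 4"
  moreover have "j = 1 \<or> j = 2 \<or> j = 3 \<or> j = 4" using \<open>1 \<le> j\<close> \<open>j \<le> 4\<close> by linarith
  ultimately show "x j = y j" by auto
qed

lemma vecI_zero: "vecI (\<lambda>_. 0) = (\<lambda>j. if j = 0 then 1 else 0)"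
  by (rule ext) (simp add: vecI_def)

definition idF :: "nat \<Rightarrow> nat \<Rightarrow> int" where "idF r k = (if r = k then 1 else 0)"
definition hornF :: "int \<Rightarrow> nat \<Rightarrow> nat \<Rightarrow> nat \<Rightarrow> int" where
  "hornF b i r k = (if r = k then (if r = i then b else 1) else 0)"
definition hornG :: "nat \<Rightarrow> int \<Rightarrow> nat \<Rightarrow> int" where
  "hornG i c r = (if r = i then c else 0)"

lemma app_id: "vecI (appA idF (\<lambda>_. 0) x) = vecI x"
  unfolding appA_def four by (rule vecI_cong4) (auto simp: idF_def)

definition upd :: "int \<Rightarrow> nat \<Rightarrow> int \<Rightarrow> (nat \<Rightarrow> int) \<Rightarrow> nat \<Rightarrow> int" where
  "upd b i c x = x(i := b * x i + c)"

lemma app_horn: "1 \<le> i \<Longrightarrow> i \<le> 4 \<Longrightarrow> vecI (appA (hornF b i) (hornG i c) x) = vecI (upd b i c x)"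
  unfolding appA_def four by (rule vecI_cong4) (auto simp: hornF_def hornG_def upd_def)

definition testF :: "int \<Rightarrow> int \<Rightarrow> int \<Rightarrow> int \<Rightarrow> nat \<Rightarrow> nat \<Rightarrow> int" where
  "testF a1 b1 a2 b2 r k = (if r = 1 then (if k = 1 then a1 else if k = 3 then b1 else 0)
     else if r = 2 then (if k = 1 then -a1 else if k = 3 then -b1 else 0)
     else if r = 3 then (if k = 2 then a2 else if k = 4 then b2 else 0)
     else if r = 4 then (if k = 2 then -a2 else if k = 4 then -b2 else 0) else 0)"
definition testG :: "int \<Rightarrow> int \<Rightarrow> nat \<Rightarrow> int" where
  "testG g1 g2 r = (if r = 1 then g1 else if r = 2 then -g1 else if r = 3 then g2 else if r = 4 then -g2 else 0)"

definition tv :: "int \<Rightarrow> int \<Rightarrow> nat \<Rightarrow> int" where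
  "tv e1 e2 r = (if r = 1 then e1 else if r = 2 then -e1 else if r = 3 then e2 else if r = 4 then -e2 else 0)"

lemma app_test: "vecI (appA (testF a1 b1 a2 b2) (testG g1 g2) x) =
   vecI (tv (a1 * x 1 + b1 * x 3 + g1) (a2 * x 2 + b2 * x 4 + g2))"
  unfolding appA_def four by (rule vecI_cong) (auto simp: testF_def testG_def tv_def)

lemma vecI_tv: "vecI (tv e1 e2) j = (if j = 0 then 1 else if j = 1 then of_int e1 else if j = 2 then - of_int e1
   else if j = 3 then of_int e2 else if j = 4 then - of_int e2 else 0)"
  by (auto simp: vecI_def tv_def)

datatype ctx = Ctx nat nat nat nat nat
datatype vst = IR | IL nat | Str bool nat bool ctx | SSt ctx | Prp ctx | Chk ctx | VAcc | VRej

fun ctxl :: "ctx \<Rightarrow> nat list" where "ctxl (Ctx q sp d par st) = [q, sp, d, par, st]"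

fun tolist :: "vst \<Rightarrow> nat list" where
  "tolist IR = [0,0,0,0,0,0,0,0,0]"
| "tolist (IL pv) = [1,pv,0,0,0,0,0,0,0]"
| "tolist (Str b r rw x) = [2, of_bool b, r, of_bool rw] @ ctxl x"
| "tolist (SSt x) = [3,0,0,0] @ ctxl x"
| "tolist (Prp x) = [4,0,0,0] @ ctxl x"
| "tolist (Chk x) = [5,0,0,0] @ ctxl x"
| "tolist VAcc = [6,0,0,0,0,0,0,0,0]"
| "tolist VRej = [7,0,0,0,0,0,0,0,0]"

lemma ctxl_inj: "ctxl x = ctxl y \<Longrightarrow> x = y"
  by (cases x; cases y) auto

lemma len_tolist: "length (tolist s) = 9"
proof (cases s)
  case (Str b r rw x) then show ?thesis by (cases x) auto
next
  case (SSt x) then show ?thesis by (cases x) auto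
next
  case (Prp x) then show ?thesis by (cases x) auto
next
  case (Chk x) then show ?thesis by (cases x) auto
qed auto

lemma tolist_inj: "tolist s = tolist s' \<Longrightarrow> s = s'"
  by (cases s; cases s') (auto dest: ctxl_inj simp: of_bool_def split: if_splits)

fun nenc :: "nat \<Rightarrow> nat list \<Rightarrow> nat" where
  "nenc N [] = 0"
| "nenc N (x # xs) = x + N * nenc N xs"

lemma nenc_inj: "length xs = length ys \<Longrightarrow> \<forall>x\<in>set xs. x < N \<Longrightarrow> \<forall>y\<in>set ys. y < N \<Longrightarrow>
  nenc N xs = nenc N ys \<Longrightarrow> xs = ys"
proof (induction xs arbitrary: ys)
  case Nil then show ?case by simp
next
  case (Cons x xs)
  then obtain y ys' where ys: "ys = y # ys'" by (cases ys) auto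
  have e: "x + N * nenc N xs = y + N * nenc N ys'" using Cons.prems ys by simp
  have "x < N" "y < N" using Cons.prems ys by auto
  then have "x = y" using e by (metis mod_mult_self2 mod_less)
  moreover have "N > 0" using \<open>x < N\<close> by simp
  then have "nenc N xs = nenc N ys'" using e \<open>x = y\<close> by simp
  ultimately show ?case using Cons ys by simp
qed

lemma nenc_lt: "\<forall>x\<in>set xs. x < N \<Longrightarrow> nenc N xs < N ^ length xs"
proof (induction xs)
  case Nil then show ?case by simp
next
  case (Cons x xs)
  then have "x < N" "nenc N xs + 1 \<le> N ^ length xs" by auto
  then have "x + N * nenc N xs < N * (nenc N xs + 1)" by simp
  also have "\<dots> \<le> N * N ^ length xs" using \<open>nenc N xs + 1 \<le> N ^ length xs\<close> by (rule mult_le_mono2)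
  finally show ?case by simp
qed

definition dcode :: "int \<Rightarrow> nat" where "dcode d = (if d = 1 then 1 else if d = -1 then 2 else 0)"
definition ys :: "bool \<Rightarrow> nat" where "ys b = (if b then 4 else 3)"
definition xs :: "bool \<Rightarrow> nat" where "xs b = (if b then 2 else 1)"
definition idFG :: "(nat \<Rightarrow> nat \<Rightarrow> int) \<times> (nat \<Rightarrow> int)" where "idFG = (idF, \<lambda>_. 0)"

locale vc = tmw M for M :: "'a dtm" + fixes K :: nat assumes Kpos: "0 < K"
begin

definition BB :: int where "BB = int (tm_nsym M)"
definition NN :: nat where "NN = tm_nst M + tm_nsym M + K + 8"
definition validst :: "vst \<Rightarrow> bool" where "validst s \<longleftrightarrow> (\<forall>x\<in>set (tolist s). x < NN)"
definition encs :: "vst \<Rightarrow> nat" where "encs s = nenc NN (tolist s)"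
definition decs :: "nat \<Rightarrow> vst" where
  "decs q = (if \<exists>s. validst s \<and> encs s = q then THE s. validst s \<and> encs s = q else VRej)"

lemma encs_inj: "validst s \<Longrightarrow> validst s' \<Longrightarrow> encs s = encs s' \<Longrightarrow> s = s'"
  unfolding validst_def encs_def by (metis nenc_inj len_tolist tolist_inj)

lemma decs_encs: "validst s \<Longrightarrow> decs (encs s) = s"
  unfolding decs_def using encs_inj by (auto intro!: the_equality)

lemma encs_lt: "validst s \<Longrightarrow> encs s < NN ^ 9"
  unfolding validst_def encs_def using nenc_lt len_tolist by metis

lemma valid_simple: "validst IR" "validst VAcc" "validst VRej"
  by (auto simp: validst_def NN_def)

lemma acc_ne_rej_enc: "encs VAcc \<noteq> encs VRej"
  using encs_inj valid_simple by blast

definition testFG :: "nat \<Rightarrow> nat \<Rightarrow> nat \<Rightarrow> (nat \<Rightarrow> nat \<Rightarrow> int) \<times> (nat \<Rightarrow> int)" where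
  "testFG sp d st = (if d = 0 then (testF (-1) 1 (-1) 1, testG 0 0)
     else if d = 1 then (testF (-BB) 1 (-1) BB, testG (- int sp) (int st))
     else (testF 1 (-BB) (-BB) 1, testG (- int st) (- int sp)))"

fun tr :: "vst \<Rightarrow> 'a tape_sym \<Rightarrow> nat \<Rightarrow> (nat \<Rightarrow> nat) \<Rightarrow> vst \<times> int" where
  "tr IR a c oc = (if a = REnd then (IL 0, -1) else (IR, 1))"
| "tr (IL pv) a c oc = (case a of LEnd \<Rightarrow> (Str False 0 False (Ctx (tm_q0 M) pv 0 0 0), 0)
     | Sym x \<Rightarrow> (IL (tm_enc M x), -1) | REnd \<Rightarrow> (VRej, 0))"
| "tr (Str b r rw x) a c oc = (if \<not> rw then (if a = REnd then (Str b r True x, -1) else (Str b r False x, 1))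
     else if a = LEnd then (if Suc r < K then (Str b (Suc r) False x, 0) else if b then (Prp x, 0) else (SSt x, 0))
     else (Str b r True x, -1))"
| "tr (SSt (Ctx q sp d par st)) a c oc = (if c < tm_nsym M \<and> (d = 0 \<longrightarrow> c = sp)
     then (Str True 0 False (Ctx q sp d par c), 0) else (VRej, 0))"
| "tr (Prp x) a c oc = (Chk x, 0)"
| "tr (Chk (Ctx q sp d par st)) a c oc = (if oc par \<noteq> 0 then (VRej, 0)
     else if q = tm_acc M then (VAcc, 0) else if q = tm_rej M then (VRej, 0)
     else (case tm_delta M q st of (q', s', d') \<Rightarrow> (Str False 0 False (Ctx q' s' (dcode d') (1 - par) 0), 0)))"
| "tr VAcc a c oc = (VAcc, 0)"
| "tr VRej a c oc = (VRej, 0)"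

fun actFG :: "vst \<Rightarrow> 'a tape_sym \<Rightarrow> nat \<Rightarrow> nat \<Rightarrow> ((nat \<Rightarrow> nat \<Rightarrow> int) \<times> (nat \<Rightarrow> int)) option" where
  "actFG (IL pv) a c i = (case a of Sym x \<Rightarrow> Some (if i = 0 then (hornF BB 2, hornG 2 (int pv)) else idFG)
     | _ \<Rightarrow> Some idFG)"
| "actFG (Str b r rw (Ctx q sp d par st)) a c i = (if rw \<or> a = REnd then Some idFG
     else if i = par then Some (hornF BB (ys b), hornG (ys b) (int c))
     else Some (hornF BB (xs b), hornG (xs b) (int c)))"
| "actFG (Prp (Ctx q sp d par st)) a c i = (if i = par then Some (testFG sp d st) else Some idFG)"
| "actFG (Chk (Ctx q sp d par st)) a c i = (if i = par then None else Some idFG)"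
| "actFG IR a c i = Some idFG"
| "actFG (SSt x) a c i = Some idFG"
| "actFG VAcc a c i = Some idFG"
| "actFG VRej a c i = Some idFG"

definition VV :: "'a verifier" where
  "VV = \<lparr> v_nst = NN ^ 9, v_nmsg = tm_nsym M, v_q0 = encs IR, v_acc = {encs VAcc}, v_rej = {encs VRej},
     v_nreg = 2, v_rdim = (\<lambda>_. 5),
     v_act = (\<lambda>q a c i. map_option (\<lambda>(F,G). affM F G) (actFG (decs q) a c i)),
     v_trans = (\<lambda>q a c oc. case tr (decs q) a c oc of (s', d) \<Rightarrow>
        if validst s' then (encs s', d) else (encs VRej, 0)) \<rparr>"

lemma tr_dirs: assumes that: "tr s a c oc = (s', d)" shows "d \<in> {-1,0,1} \<and> (a = LEnd \<longrightarrow> d \<noteq> -1) \<and> (a = REnd \<longrightarrow> d \<noteq> 1)"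
proof (cases s)
  case (IL pv) then show ?thesis using that by (cases a) auto
next
  case (Str b r rw x) then show ?thesis using that by (auto split: if_splits)
next
  case (SSt x) then show ?thesis using that by (cases x) (auto split: if_splits)
next
  case (Chk x) then show ?thesis using that by (cases x) (auto split: if_splits prod.splits)
qed (use that in \<open>auto split: if_splits\<close>)

lemma wf_VV: "wf_verifier VV"
  unfolding wf_verifier_def
proof (intro conjI allI impI)
  show "v_q0 VV < v_nst VV" by (simp add: VV_def encs_lt valid_simple)
  show "v_acc VV \<subseteq> {..<v_nst VV}" "v_rej VV \<subseteq> {..<v_nst VV}" by (auto simp: VV_def encs_lt valid_simple)
  show "v_acc VV \<inter> v_rej VV = {}" using acc_ne_rej_enc by (simp add: VV_def)
next
  fix i assume "i < v_nreg VV" then show "1 \<le> v_rdim VV i" by (simp add: VV_def)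
next
  fix q a c i A k
  assume "v_act VV q a c i = Some A" "k < v_rdim VV i"
  then show "(\<Sum>r<v_rdim VV i. A r k) = 1" by (auto simp: VV_def affM_colsum)
next
  fix q a c oc
  show "case v_trans VV q a c oc of (q', d) \<Rightarrow> q' < v_nst VV \<and> d \<in> {-1, 0, 1} \<and> (a = LEnd \<longrightarrow> d \<noteq> -1) \<and> (a = REnd \<longrightarrow> d \<noteq> 1)"
    using tr_dirs by (auto simp: VV_def encs_lt valid_simple split: prod.splits)
qed

lemma rat_VV: "rational_verifier VV"
  unfolding rational_verifier_def by (auto simp: VV_def affM_rat)

end

context vc begin

definition regsP :: "nat \<Rightarrow> (nat \<Rightarrow> int) \<Rightarrow> (nat \<Rightarrow> int) \<Rightarrow> nat \<Rightarrow> nat \<Rightarrow> real" where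
  "regsP par X Y = (\<lambda>i. if i < 2 then (if i = par then vecI X else vecI Y) else vecI (\<lambda>_. 0))"

fun parof :: "vst \<Rightarrow> nat" where
  "parof (Str b r rw (Ctx q sp d par st)) = par"
| "parof (SSt (Ctx q sp d par st)) = par"
| "parof (Prp (Ctx q sp d par st)) = par"
| "parof (Chk (Ctx q sp d par st)) = par"
| "parof _ = 0"

definition cf :: "vst \<Rightarrow> nat \<Rightarrow> (nat \<Rightarrow> int) \<Rightarrow> (nat \<Rightarrow> int) \<Rightarrow> hist \<Rightarrow> vconf" where
  "cf s p X Y h = (encs s, p, regsP (parof s) X Y, h)"

fun goodctx :: "ctx \<Rightarrow> bool" where
  "goodctx (Ctx q sp d par st) \<longleftrightarrow> q < tm_nst M \<and> sp < tm_nsym M \<and> d < 3 \<and> par < 2 \<and> st < tm_nsym M"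

lemma NN_big: "tm_nst M < NN" "tm_nsym M < NN" "K < NN" "8 \<le> NN" by (auto simp: NN_def)

lemma goodctx_valid: assumes "goodctx x"
  shows "validst (SSt x)" "validst (Prp x)" "validst (Chk x)" "r < K \<Longrightarrow> validst (Str b r rw x)"
  using assms NN_big by (cases x; auto simp: validst_def of_bool_def)+

lemma valid_IL: "pv < tm_nsym M \<Longrightarrow> validst (IL pv)"
  using NN_big by (auto simp: validst_def)

lemma start_cf: "start VV = cf IR 0 (\<lambda>_. 0) (\<lambda>_. 0) []"
  by (auto simp: start_def cf_def VV_def regsP_def vecI_zero)

lemma nothalt_enc: "validst s \<Longrightarrow> s \<noteq> VAcc \<Longrightarrow> s \<noteq> VRej \<Longrightarrow> encs s \<notin> v_acc VV \<union> v_rej VV"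
  using encs_inj valid_simple by (auto simp: VV_def)

lemma hs_cases: "hs VV S \<Longrightarrow> S = {encs VAcc} \<or> S = {encs VRej}"
  by (auto simp: hs_def VV_def)

lemma reach_acc_VAcc: "reach VV (v_acc VV) P w m (encs VAcc, p, R, h) = 1"
  by (cases m) (auto simp: VV_def)
lemma reach_rej_VRej: "reach VV (v_rej VV) P w m (encs VRej, p, R, h) = 1"
  by (cases m) (auto simp: VV_def)
lemma reach_rej_VAcc: "reach VV (v_rej VV) P w m (encs VAcc, p, R, h) = 0"
  using acc_ne_rej_enc by (cases m) (auto simp: VV_def)
lemma reach_acc_VRej: "reach VV (v_acc VV) P w m (encs VRej, p, R, h) = 0"
  using acc_ne_rej_enc by (cases m) (auto simp: VV_def)

lemma dlink_det:
  assumes v: "validst s" and nh: "s \<noteq> VAcc" "s \<noteq> VRej"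
    and act: "\<And>i. i < 2 \<Longrightarrow> actFG s (tape_at w p) (P w h) i \<noteq> None"
    and t: "tr s (tape_at w p) (P w h) (\<lambda>_. 0) = (s', d)" and v': "validst s'"
  shows "dlink VV P w (encs s, p, R, h)
     (encs s', nat (int p + d), vstep VV (encs s) (tape_at w p) (P w h) R (\<lambda>_. 0), h @ [(P w h, \<lambda>_. 0)])"
proof -
  let ?a = "tape_at w p" and ?c = "P w h"
  have nw: "\<not> weighed VV (encs s) ?a ?c i" for i
    using act by (auto simp: weighed_def VV_def decs_encs[OF v])
  have outs: "outs VV (encs s) ?a ?c = {\<lambda>_. 0}"
    using nw by (auto simp: outs_def)
  have op: "oprob VV (encs s) ?a ?c R (\<lambda>_. 0) = 1"
    using nw by (simp add: oprob_def)
  have tt: "v_trans VV (encs s) ?a ?c (\<lambda>_. 0) = (encs s', d)"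
    using t v' by (simp add: VV_def decs_encs[OF v])
  show ?thesis
    unfolding dlink_def
    using nothalt_enc[OF v nh] by (auto simp: outs op tt Let_def hs_def)
qed

lemma vstep_regs:
  assumes v: "validst s" and par: "par < 2"
    and a1: "actFG s a c par = Some (Fa, Ga)" and a2: "actFG s a c (1 - par) = Some (Fb, Gb)"
  shows "vstep VV (encs s) a c (regsP par X Y) oc = regsP par (appA Fa Ga X) (appA Fb Gb Y)"
proof
  fix i
  show "vstep VV (encs s) a c (regsP par X Y) oc i = regsP par (appA Fa Ga X) (appA Fb Gb Y) i"
  proof (cases "i < 2")
    case True
    then have "i = par \<or> i = 1 - par" using par by auto
    then show ?thesis
      using True a1 a2 par by (auto simp: vstep_def VV_def decs_encs[OF v] regsP_def affM_apply)
  next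
    case False then show ?thesis by (simp add: vstep_def VV_def regsP_def)
  qed
qed

end

context vc begin

lemma cf_cong: assumes "vecI X = vecI X'" "vecI Y = vecI Y'" shows "cf s p X Y h = cf s p X' Y' h"
  unfolding cf_def regsP_def by (simp only: assms)

lemma dlink_cf:
  assumes v: "validst s" and nh: "s \<noteq> VAcc" "s \<noteq> VRej" and par: "parof s < 2"
    and a1: "actFG s (tape_at w p) (P w h) (parof s) = Some (Fa, Ga)"
    and a2: "actFG s (tape_at w p) (P w h) (1 - parof s) = Some (Fb, Gb)"
    and t: "tr s (tape_at w p) (P w h) (\<lambda>_. 0) = (s', d)" and v': "validst s'"
    and par': "parof s' = parof s" and p': "p' = nat (int p + d)"
    and X': "vecI X' = vecI (appA Fa Ga X)" and Y': "vecI Y' = vecI (appA Fb Gb Y)"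
  shows "dlink VV P w (cf s p X Y h) (cf s' p' X' Y' (h @ [(P w h, \<lambda>_. 0)]))"
proof -
  have act: "actFG s (tape_at w p) (P w h) i \<noteq> None" if "i < 2" for i
  proof -
    have "i = parof s \<or> i = 1 - parof s" using that par by auto
    then show ?thesis using a1 a2 by auto
  qed
  have "dlink VV P w (encs s, p, regsP (parof s) X Y, h)
     (encs s', nat (int p + d), vstep VV (encs s) (tape_at w p) (P w h) (regsP (parof s) X Y) (\<lambda>_. 0), h @ [(P w h, \<lambda>_. 0)])"
    by (rule dlink_det[where P=P and w=w and p=p and h=h, OF v nh act t v'])
  moreover have "vstep VV (encs s) (tape_at w p) (P w h) (regsP (parof s) X Y) (\<lambda>_. 0) = regsP (parof s) X' Y'"
    using vstep_regs[OF v par a1 a2, of X Y "\<lambda>_. 0"] unfolding X'[symmetric] Y'[symmetric] regsP_def .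
  ultimately show ?thesis by (simp add: cf_def par' p')
qed

lemma tape_at_0: "tape_at w 0 = LEnd" by (simp add: tape_at_def)
lemma tape_at_mid: "1 \<le> p \<Longrightarrow> p \<le> length w \<Longrightarrow> tape_at w p = Sym (w ! (p - 1))" by (simp add: tape_at_def)
lemma tape_at_end: "tape_at w (Suc (length w)) = REnd" by (simp add: tape_at_def)
lemma tape_at_notR: "p \<le> length w \<Longrightarrow> tape_at w p \<noteq> REnd" by (simp add: tape_at_def)
lemma tape_at_notL: "1 \<le> p \<Longrightarrow> tape_at w p \<noteq> LEnd" by (simp add: tape_at_def)

abbreviation "hx P w h \<equiv> h @ [(P w h, \<lambda>_. 0)]"

lemma st_IR_fwd: "p \<le> length w \<Longrightarrow> dlink VV P w (cf IR p X Y h) (cf IR (Suc p) X Y (hx P w h))"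
  by (rule dlink_cf[where Fa=idF and Ga="\<lambda>_. 0" and Fb=idF and Gb="\<lambda>_. 0" and d=1])
     (auto simp: valid_simple tape_at_notR idFG_def app_id)

lemma st_IR_turn: "dlink VV P w (cf IR (Suc (length w)) X Y h) (cf (IL 0) (length w) X Y (hx P w h))"
  by (rule dlink_cf[where Fa=idF and Ga="\<lambda>_. 0" and Fb=idF and Gb="\<lambda>_. 0" and d="-1"])
     (use nsym_ge2 in \<open>auto simp: valid_simple tape_at_end idFG_def app_id valid_IL\<close>)

lemma st_IL: "1 \<le> p \<Longrightarrow> p \<le> length w \<Longrightarrow> pv < tm_nsym M \<Longrightarrow>
   dlink VV P w (cf (IL pv) p X Y h) (cf (IL (tm_enc M (w ! (p - 1)))) (p - 1) (upd BB 2 (int pv) X) Y (hx P w h))"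
  by (rule dlink_cf[where Fa="hornF BB 2" and Ga="hornG 2 (int pv)" and Fb=idF and Gb="\<lambda>_. 0" and d="-1"])
     (auto simp: valid_IL tape_at_mid idFG_def app_id app_horn enc_lt)

lemma st_IL_end: "pv < tm_nsym M \<Longrightarrow>
   dlink VV P w (cf (IL pv) 0 X Y h) (cf (Str False 0 False (Ctx (tm_q0 M) pv 0 0 0)) 0 X Y (hx P w h))"
  by (rule dlink_cf[where Fa=idF and Ga="\<lambda>_. 0" and Fb=idF and Gb="\<lambda>_. 0" and d=0])
     (auto simp: valid_IL tape_at_0 idFG_def app_id goodctx_valid q0_lt Kpos nsym_ge2)

lemma ys_xs: "1 \<le> ys b" "ys b \<le> 4" "1 \<le> xs b" "xs b \<le> 4" by (auto simp: ys_def xs_def)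
lemmas app_horn_ys = app_horn[OF ys_xs(1,2)] and app_horn_xs = app_horn[OF ys_xs(3,4)]
lemma par_ne: "par < (2::nat) \<Longrightarrow> (Suc 0 - par = par) = False" by (cases par) auto
lemma par_ne2: "par < (2::nat) \<Longrightarrow> (par = Suc 0 - par) = False" by (cases par) auto

lemma st_fwd: "goodctx x \<Longrightarrow> r < K \<Longrightarrow> p \<le> length w \<Longrightarrow>
   dlink VV P w (cf (Str b r False x) p X Y h)
     (cf (Str b r False x) (Suc p) (upd BB (ys b) (int (P w h)) X) (upd BB (xs b) (int (P w h)) Y) (hx P w h))"
  by (cases x, rule dlink_cf[where Fa="hornF BB (ys b)" and Ga="hornG (ys b) (int (P w h))"
        and Fb="hornF BB (xs b)" and Gb="hornG (xs b) (int (P w h))" and d=1])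
     (auto simp: goodctx_valid tape_at_notR app_horn_ys app_horn_xs par_ne)

lemma st_turn: "goodctx x \<Longrightarrow> r < K \<Longrightarrow>
   dlink VV P w (cf (Str b r False x) (Suc (length w)) X Y h) (cf (Str b r True x) (length w) X Y (hx P w h))"
  by (cases x, rule dlink_cf[where Fa=idF and Ga="\<lambda>_. 0" and Fb=idF and Gb="\<lambda>_. 0" and d="-1"])
     (auto simp: goodctx_valid tape_at_end app_id idFG_def par_ne)

lemma st_rew: "goodctx x \<Longrightarrow> r < K \<Longrightarrow> p \<le> length w \<Longrightarrow>
   dlink VV P w (cf (Str b r True x) (Suc p) X Y h) (cf (Str b r True x) p X Y (hx P w h))"
  by (cases x, rule dlink_cf[where Fa=idF and Ga="\<lambda>_. 0" and Fb=idF and Gb="\<lambda>_. 0" and d="-1"])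
     (auto simp: goodctx_valid tape_at_notL app_id idFG_def par_ne)

definition nextS :: "bool \<Rightarrow> nat \<Rightarrow> ctx \<Rightarrow> vst" where
  "nextS b r x = (if Suc r < K then Str b (Suc r) False x else if b then Prp x else SSt x)"

lemma st_rew_end: "goodctx x \<Longrightarrow> r < K \<Longrightarrow>
   dlink VV P w (cf (Str b r True x) 0 X Y h) (cf (nextS b r x) 0 X Y (hx P w h))"
  by (cases x, rule dlink_cf[where Fa=idF and Ga="\<lambda>_. 0" and Fb=idF and Gb="\<lambda>_. 0" and d=0])
     (auto simp: goodctx_valid tape_at_0 app_id idFG_def nextS_def par_ne)

lemma st_S_ok: "goodctx (Ctx q sp d par st) \<Longrightarrow> P w h < tm_nsym M \<Longrightarrow> (d = 0 \<longrightarrow> P w h = sp) \<Longrightarrow>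
   dlink VV P w (cf (SSt (Ctx q sp d par st)) p X Y h) (cf (Str True 0 False (Ctx q sp d par (P w h))) p X Y (hx P w h))"
  by (rule dlink_cf[where Fa=idF and Ga="\<lambda>_. 0" and Fb=idF and Gb="\<lambda>_. 0" and d=0])
     (auto simp: goodctx_valid app_id idFG_def Kpos par_ne)

lemma st_S_bad: "goodctx (Ctx q sp d par st) \<Longrightarrow> \<not> (P w h < tm_nsym M \<and> (d = 0 \<longrightarrow> P w h = sp)) \<Longrightarrow>
   reach VV (v_rej VV) P w (Suc m) (cf (SSt (Ctx q sp d par st)) p X Y h) = 1"
proof -
  assume g: "goodctx (Ctx q sp d par st)" and bad: "\<not> (P w h < tm_nsym M \<and> (d = 0 \<longrightarrow> P w h = sp))"
  have "dlink VV P w (cf (SSt (Ctx q sp d par st)) p X Y h) (encs VRej, nat (int p + 0),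
     vstep VV (encs (SSt (Ctx q sp d par st))) (tape_at w p) (P w h) (regsP par X Y) (\<lambda>_. 0), hx P w h)"
    unfolding cf_def parof.simps
    by (rule dlink_det) (use g bad in \<open>auto simp: goodctx_valid valid_simple\<close>)
  then show ?thesis unfolding dlink_def
    by (simp add: hs_def reach_rej_VRej)
qed

definition etest :: "nat \<Rightarrow> nat \<Rightarrow> nat \<Rightarrow> (nat \<Rightarrow> int) \<Rightarrow> int \<times> int" where
  "etest sp d st X = (if d = 0 then (X 3 - X 1, X 4 - X 2)
     else if d = 1 then (- BB * X 1 + X 3 - int sp, - X 2 + BB * X 4 + int st)
     else (X 1 - BB * X 3 - int st, - BB * X 2 + X 4 - int sp))"

lemma st_Prp: "goodctx (Ctx q sp d par st) \<Longrightarrow>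
   dlink VV P w (cf (Prp (Ctx q sp d par st)) p X Y h)
     (cf (Chk (Ctx q sp d par st)) p (tv (fst (etest sp d st X)) (snd (etest sp d st X))) Y (hx P w h))"
  by (rule dlink_cf[where Fa="fst (testFG sp d st)" and Ga="snd (testFG sp d st)" and Fb=idF and Gb="\<lambda>_. 0" and d=0])
     (auto simp: goodctx_valid app_id idFG_def testFG_def etest_def app_test par_ne)

end

context vc begin

definition ocp :: "nat \<Rightarrow> nat \<Rightarrow> nat \<Rightarrow> nat" where "ocp par u = (\<lambda>i. if i = par then u else 0)"

lemma ocp0: "ocp par 0 = (\<lambda>_. 0)" by (auto simp: ocp_def)

lemma ocp_image: "{oc. \<forall>i. if i = par then oc i < 5 else oc i = 0} = ocp par ` {..<5}"
proof (rule set_eqI)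
  fix oc :: "nat \<Rightarrow> nat"
  show "oc \<in> {oc. \<forall>i. if i = par then oc i < 5 else oc i = 0} \<longleftrightarrow> oc \<in> ocp par ` {..<5}"
  proof
    assume a: "oc \<in> {oc. \<forall>i. if i = par then oc i < 5 else oc i = 0}"
    then have al: "\<forall>i. if i = par then oc i < 5 else oc i = 0" by simp
    then have "oc par < 5" by (metis (full_types))
    have "oc = ocp par (oc par)"
    proof
      fix i show "oc i = ocp par (oc par) i"
      proof (cases "i = par")
        case True then show ?thesis by (simp add: ocp_def)
      next
        case False then have "oc i = 0" using al by metis
        then show ?thesis using False by (simp add: ocp_def)
      qed
    qed
    then show "oc \<in> ocp par ` {..<5}" using \<open>oc par < 5\<close> by blast
  next
    assume "oc \<in> ocp par ` {..<5}"
    then obtain u where "u < 5" "oc = ocp par u" by blast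
    then show "oc \<in> {oc. \<forall>i. if i = par then oc i < 5 else oc i = 0}" by (simp add: ocp_def)
  qed
qed

lemma vecI_tv_abs_sum: "(\<Sum>j<5. \<bar>vecI (tv e1 e2) j\<bar>) = 1 + 2 * \<bar>of_int e1\<bar> + 2 * \<bar>of_int e2\<bar>"
  unfolding five by (simp add: vecI_tv)

lemma chk_reach:
  assumes g: "goodctx (Ctx q sp d par st)" and S: "hs VV S"
  shows "reach VV S P w (Suc m) (cf (Chk (Ctx q sp d par st)) p (tv e1 e2) Y h) =
    (\<Sum>u<5. \<bar>vecI (tv e1 e2) u\<bar> / (1 + 2 * \<bar>of_int e1\<bar> + 2 * \<bar>of_int e2\<bar>) *
       reach VV S P w m (fst (v_trans VV (encs (Chk (Ctx q sp d par st))) (tape_at w p) (P w h) (ocp par u)),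
          nat (int p + snd (v_trans VV (encs (Chk (Ctx q sp d par st))) (tape_at w p) (P w h) (ocp par u))),
          vstep VV (encs (Chk (Ctx q sp d par st))) (tape_at w p) (P w h) (regsP par (tv e1 e2) Y) (ocp par u),
          h @ [(P w h, ocp par u)]))"
proof -
  define s where "s = Chk (Ctx q sp d par st)"
  have v: "validst s" using g goodctx_valid by (simp add: s_def)
  have par: "par < 2" using g by simp
  let ?a = "tape_at w p" and ?c = "P w h"
  have wi: "weighed VV (encs s) ?a ?c i \<longleftrightarrow> i = par" for i
    using par unfolding weighed_def VV_def by (simp add: decs_encs[OF v]) (auto simp: s_def idFG_def)
  have outs: "outs VV (encs s) ?a ?c = ocp par ` {..<5}"
    unfolding outs_def wi ocp_image[symmetric] by (simp add: VV_def)
  have inj: "inj_on (ocp par) {..<5}"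
    by (rule inj_onI) (metis ocp_def)
  have wset: "{i. weighed VV (encs s) ?a ?c i} = {par}" using wi by auto
  have op: "oprob VV (encs s) ?a ?c (regsP par (tv e1 e2) Y) (ocp par u) =
     \<bar>vecI (tv e1 e2) u\<bar> / (1 + 2 * \<bar>of_int e1\<bar> + 2 * \<bar>of_int e2\<bar>)" for u
    unfolding oprob_def wset using par
    by (simp add: VV_def regsP_def ocp_def vecI_tv_abs_sum)
  have nh: "encs s \<notin> v_acc VV \<union> v_rej VV" using nothalt_enc[OF v] by (simp add: s_def)
  then have nS: "encs s \<notin> S" using S by (auto simp: hs_def)
  have "reach VV S P w (Suc m) (encs s, p, regsP par (tv e1 e2) Y, h) =
    (\<Sum>u<5. \<bar>vecI (tv e1 e2) u\<bar> / (1 + 2 * \<bar>of_int e1\<bar> + 2 * \<bar>of_int e2\<bar>) *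
       reach VV S P w m (fst (v_trans VV (encs s) (tape_at w p) (P w h) (ocp par u)),
          nat (int p + snd (v_trans VV (encs s) (tape_at w p) (P w h) (ocp par u))),
          vstep VV (encs s) (tape_at w p) (P w h) (regsP par (tv e1 e2) Y) (ocp par u),
          h @ [(P w h, ocp par u)]))"
  proof -
    have "reach VV S P w (Suc m) (encs s, p, regsP par (tv e1 e2) Y, h) =
       (\<Sum>oc\<in>outs VV (encs s) ?a ?c. oprob VV (encs s) ?a ?c (regsP par (tv e1 e2) Y) oc *
          reach VV S P w m (fst (v_trans VV (encs s) ?a ?c oc), nat (int p + snd (v_trans VV (encs s) ?a ?c oc)),
            vstep VV (encs s) ?a ?c (regsP par (tv e1 e2) Y) oc, h @ [(?c, oc)]))"
      using nh nS by (simp only: reach.simps Let_def if_False Un_iff de_Morgan_disj simp_thms)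
    also have "\<dots> = (\<Sum>u<5. oprob VV (encs s) ?a ?c (regsP par (tv e1 e2) Y) (ocp par u) *
          reach VV S P w m (fst (v_trans VV (encs s) ?a ?c (ocp par u)), nat (int p + snd (v_trans VV (encs s) ?a ?c (ocp par u))),
            vstep VV (encs s) ?a ?c (regsP par (tv e1 e2) Y) (ocp par u), h @ [(?c, ocp par u)]))"
      unfolding outs by (subst sum.reindex[OF inj]) (simp only: comp_def)
    finally show ?thesis unfolding op .
  qed
  then show ?thesis unfolding cf_def s_def parof.simps .
qed

lemma chk_trans_bad: "goodctx (Ctx q sp d par st) \<Longrightarrow> u \<noteq> 0 \<Longrightarrow>
   v_trans VV (encs (Chk (Ctx q sp d par st))) a c (ocp par u) = (encs VRej, 0)"
  using goodctx_valid(3) valid_simple by (simp add: VV_def decs_encs ocp_def)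

lemma chk_fail:
  assumes g: "goodctx (Ctx q sp d par st)" and ne: "e1 \<noteq> 0 \<or> e2 \<noteq> 0"
  shows "reach VV (v_rej VV) P w (Suc m) (cf (Chk (Ctx q sp d par st)) p (tv e1 e2) Y h) \<ge> 2/3"
proof -
  let ?s = "Chk (Ctx q sp d par st)"
  let ?D = "1 + 2 * \<bar>real_of_int e1\<bar> + 2 * \<bar>real_of_int e2\<bar>"
  let ?f = "\<lambda>u. \<bar>vecI (tv e1 e2) u\<bar> / ?D *
       reach VV (v_rej VV) P w m (fst (v_trans VV (encs ?s) (tape_at w p) (P w h) (ocp par u)),
          nat (int p + snd (v_trans VV (encs ?s) (tape_at w p) (P w h) (ocp par u))),
          vstep VV (encs ?s) (tape_at w p) (P w h) (regsP par (tv e1 e2) Y) (ocp par u),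
          h @ [(P w h, ocp par u)])"
  have hs: "hs VV (v_rej VV)" by (simp add: hs_def)
  have Dpos: "?D > 0" by (simp add: add_pos_nonneg)
  have fo: "?f u = \<bar>vecI (tv e1 e2) u\<bar> / ?D" if "u \<noteq> 0" for u
    using chk_trans_bad[OF g that] by (simp add: reach_rej_VRej)
  have f0: "?f 0 \<ge> 0" using Dpos by (simp add: reach_nonneg)
  have "reach VV (v_rej VV) P w (Suc m) (cf ?s p (tv e1 e2) Y h) = (\<Sum>u<5. ?f u)"
    by (rule chk_reach[OF g hs])
  also have "\<dots> = ?f 0 + ?f 1 + ?f 2 + ?f 3 + ?f 4" unfolding five by simp
  also have "\<dots> = ?f 0 + (\<bar>vecI (tv e1 e2) 1\<bar> / ?D + \<bar>vecI (tv e1 e2) 2\<bar> / ?D +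
      \<bar>vecI (tv e1 e2) 3\<bar> / ?D + \<bar>vecI (tv e1 e2) 4\<bar> / ?D)"
  proof -
    have f1: "?f 1 = \<bar>vecI (tv e1 e2) 1\<bar> / ?D" by (rule fo) simp
    have f2: "?f 2 = \<bar>vecI (tv e1 e2) 2\<bar> / ?D" by (rule fo) simp
    have f3: "?f 3 = \<bar>vecI (tv e1 e2) 3\<bar> / ?D" by (rule fo) simp
    have f4: "?f 4 = \<bar>vecI (tv e1 e2) 4\<bar> / ?D" by (rule fo) simp
    show ?thesis unfolding f1 f2 f3 f4 by (simp only: add.assoc)
  qed
  also have "\<dots> = ?f 0 + (2 * \<bar>real_of_int e1\<bar> + 2 * \<bar>real_of_int e2\<bar>) / ?D"
    by (simp add: vecI_tv add_divide_distrib)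
  finally have eq: "reach VV (v_rej VV) P w (Suc m) (cf ?s p (tv e1 e2) Y h) =
     ?f 0 + (2 * \<bar>real_of_int e1\<bar> + 2 * \<bar>real_of_int e2\<bar>) / ?D" .
  have "\<bar>real_of_int e1\<bar> + \<bar>real_of_int e2\<bar> \<ge> 1" using ne by linarith
  then have "(2 * \<bar>real_of_int e1\<bar> + 2 * \<bar>real_of_int e2\<bar>) / ?D \<ge> 2/3"
    using Dpos by (simp add: field_simps)
  then show ?thesis using eq f0 by linarith
qed

lemma chk_ok_reach:
  assumes g: "goodctx (Ctx q sp d par st)" and S: "hs VV S"
  shows "reach VV S P w (Suc m) (cf (Chk (Ctx q sp d par st)) p (tv 0 0) Y h) =
     reach VV S P w m (fst (v_trans VV (encs (Chk (Ctx q sp d par st))) (tape_at w p) (P w h) (\<lambda>_. 0)),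
          nat (int p + snd (v_trans VV (encs (Chk (Ctx q sp d par st))) (tape_at w p) (P w h) (\<lambda>_. 0))),
          vstep VV (encs (Chk (Ctx q sp d par st))) (tape_at w p) (P w h) (regsP par (tv 0 0) Y) (\<lambda>_. 0),
          hx P w h)"
  unfolding chk_reach[OF g S] five by (simp add: vecI_tv ocp0)

lemma chk_ok_acc:
  assumes g: "goodctx (Ctx (tm_acc M) sp d par st)"
  shows "reach VV (v_acc VV) P w (Suc m) (cf (Chk (Ctx (tm_acc M) sp d par st)) p (tv 0 0) Y h) = 1"
    "reach VV (v_rej VV) P w (Suc m) (cf (Chk (Ctx (tm_acc M) sp d par st)) p (tv 0 0) Y h) = 0"
proof -
  have v: "validst (Chk (Ctx (tm_acc M) sp d par st))" using goodctx_valid(3)[OF g] .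
  have t: "v_trans VV (encs (Chk (Ctx (tm_acc M) sp d par st))) a c (\<lambda>_. 0) = (encs VAcc, 0)" for a c
    by (simp add: VV_def decs_encs[OF v] valid_simple)
  show "reach VV (v_acc VV) P w (Suc m) (cf (Chk (Ctx (tm_acc M) sp d par st)) p (tv 0 0) Y h) = 1"
    using chk_ok_reach[OF g, of "v_acc VV"] by (simp add: hs_def t reach_acc_VAcc)
  show "reach VV (v_rej VV) P w (Suc m) (cf (Chk (Ctx (tm_acc M) sp d par st)) p (tv 0 0) Y h) = 0"
    using chk_ok_reach[OF g, of "v_rej VV"] by (simp add: hs_def t reach_rej_VAcc)
qed

lemma chk_vstep0:
  assumes g: "goodctx (Ctx q sp d par st)"
  shows "vstep VV (encs (Chk (Ctx q sp d par st))) a c (regsP par X Y) (\<lambda>_. 0) = regsP (1 - par) Y (\<lambda>_. 0)"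
proof
  fix i
  have v: "validst (Chk (Ctx q sp d par st))" using goodctx_valid(3)[OF g] .
  have par: "par < 2" using g by simp
  show "vstep VV (encs (Chk (Ctx q sp d par st))) a c (regsP par X Y) (\<lambda>_. 0) i = regsP (1 - par) Y (\<lambda>_. 0) i"
  proof (cases "i < 2")
    case True
    then have "i = par \<or> i = 1 - par" using par by auto
    then show ?thesis
    proof
      assume ip: "i = par"
      have ne: "par \<noteq> 1 - par" "1 - par \<noteq> par" using par by (cases par; auto)+
      show ?thesis using par ip ne
        by (auto simp: vstep_def VV_def decs_encs[OF v] regsP_def vecI_zero; presburger)
    next
      assume i: "i = 1 - par"
      then have "i \<noteq> par" using par by (cases par) auto
      then show ?thesis using par i True app_id[of Y]
        by (auto simp: vstep_def VV_def decs_encs[OF v] regsP_def idFG_def affM_apply; presburger)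
    qed
  next
    case False then show ?thesis by (simp add: vstep_def VV_def regsP_def)
  qed
qed

lemma chk_ok_rej:
  assumes g: "goodctx (Ctx (tm_rej M) sp d par st)"
  shows "reach VV (v_rej VV) P w (Suc m) (cf (Chk (Ctx (tm_rej M) sp d par st)) p (tv 0 0) Y h) = 1"
proof -
  have v: "validst (Chk (Ctx (tm_rej M) sp d par st))" using goodctx_valid(3)[OF g] .
  have t: "v_trans VV (encs (Chk (Ctx (tm_rej M) sp d par st))) a c (\<lambda>_. 0) = (encs VRej, 0)" for a c
    using acc_ne_rej by (simp add: VV_def decs_encs[OF v] valid_simple)
  show ?thesis
    using chk_ok_reach[OF g, of "v_rej VV"] by (simp add: hs_def t reach_rej_VRej)
qed

lemma chk_ok_cont:
  assumes g: "goodctx (Ctx q sp d par st)" and nh: "q \<noteq> tm_acc M" "q \<noteq> tm_rej M"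
    and dl: "tm_delta M q st = (q', s', d')"
  shows "dlink VV P w (cf (Chk (Ctx q sp d par st)) p (tv 0 0) Y h)
     (cf (Str False 0 False (Ctx q' s' (dcode d') (1 - par) 0)) p Y (\<lambda>_. 0) (hx P w h))"
proof -
  have v: "validst (Chk (Ctx q sp d par st))" using goodctx_valid(3)[OF g] .
  have gq: "q < tm_nst M" "st < tm_nsym M" "par < 2" using g by auto
  have g': "goodctx (Ctx q' s' (dcode d') (1 - par) 0)"
    using delta_bounds[OF gq(1,2) dl] gq(3) nsym_ge2 by (auto simp: dcode_def)
  have v': "validst (Str False 0 False (Ctx q' s' (dcode d') (1 - par) 0))"
    using goodctx_valid(4)[OF g' Kpos] .
  have t: "v_trans VV (encs (Chk (Ctx q sp d par st))) a c (\<lambda>_. 0) = (encs (Str False 0 False (Ctx q' s' (dcode d') (1 - par) 0)), 0)" for a c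
    using nh dl v' by (simp add: VV_def decs_encs[OF v])
  show ?thesis
    unfolding dlink_def
  proof (intro conjI allI impI)
    show "fst (cf (Chk (Ctx q sp d par st)) p (tv 0 0) Y h) \<notin> v_acc VV \<union> v_rej VV"
      using nothalt_enc[OF v] by (simp add: cf_def)
    fix S m assume S: "hs VV S"
    show "reach VV S P w (Suc m) (cf (Chk (Ctx q sp d par st)) p (tv 0 0) Y h) =
      reach VV S P w m (cf (Str False 0 False (Ctx q' s' (dcode d') (1 - par) 0)) p Y (\<lambda>_. 0) (hx P w h))"
      unfolding chk_ok_reach[OF g S] t using chk_vstep0[OF g] by (simp add: cf_def)
  qed
qed

end

context vc begin

lemma fwd_run:
  assumes g: "goodctx x" and r: "r < K" and pk: "p + k \<le> Suc (length w)" and inv: "Inv X Y h"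
    and pres: "\<And>X Y h'. Inv X Y h' \<Longrightarrow> length h' < length h + k \<Longrightarrow>
        Inv (upd BB (ys b) (int (P w h')) X) (upd BB (xs b) (int (P w h')) Y) (hx P w h')"
  shows "\<exists>X' Y' h'. Inv X' Y' h' \<and> length h' = length h + k \<and>
     dpath VV P w k (cf (Str b r False x) p X Y h) (cf (Str b r False x) (p + k) X' Y' h')"
  using pk inv pres
proof (induction k arbitrary: p X Y h)
  case 0
  then show ?case by (auto intro: dpath.intros)
next
  case (Suc k)
  let ?X1 = "upd BB (ys b) (int (P w h)) X" and ?Y1 = "upd BB (xs b) (int (P w h)) Y"
  have l1: "dlink VV P w (cf (Str b r False x) p X Y h) (cf (Str b r False x) (Suc p) ?X1 ?Y1 (hx P w h))"
    using st_fwd[OF g r] Suc.prems(1) by simp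
  have i1: "Inv ?X1 ?Y1 (hx P w h)" using Suc.prems(3)[OF Suc.prems(2)] by simp
  have "\<exists>X' Y' h'. Inv X' Y' h' \<and> length h' = length (hx P w h) + k \<and>
     dpath VV P w k (cf (Str b r False x) (Suc p) ?X1 ?Y1 (hx P w h)) (cf (Str b r False x) (Suc p + k) X' Y' h')"
    by (rule Suc.IH) (use Suc.prems i1 in auto)
  then obtain X' Y' h' where "Inv X' Y' h'" "length h' = length (hx P w h) + k"
     "dpath VV P w k (cf (Str b r False x) (Suc p) ?X1 ?Y1 (hx P w h)) (cf (Str b r False x) (Suc p + k) X' Y' h')"
    by blast
  then show ?case using l1 by (intro exI[of _ X'] exI[of _ Y'] exI[of _ h']) (auto intro: dpath.intros)
qed

lemma rew_run:
  assumes g: "goodctx x" and r: "r < K" and p: "p \<le> Suc (length w)"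
  shows "\<exists>h'. length h' = length h + p \<and> dpath VV P w p (cf (Str b r True x) p X Y h) (cf (Str b r True x) 0 X Y h')"
  using p
proof (induction p arbitrary: h)
  case 0 then show ?case by (auto intro: dpath.intros)
next
  case (Suc p)
  have l1: "dlink VV P w (cf (Str b r True x) (Suc p) X Y h) (cf (Str b r True x) p X Y (hx P w h))"
    using st_rew[OF g r] Suc.prems by simp
  obtain h' where "length h' = length (hx P w h) + p" "dpath VV P w p (cf (Str b r True x) p X Y (hx P w h)) (cf (Str b r True x) 0 X Y h')"
    using Suc.IH[of "hx P w h"] Suc.prems by auto
  then show ?case using l1 by (intro exI[of _ h']) (auto intro: dpath.intros)
qed

lemma pass_run:
  assumes g: "goodctx x" and r: "r < K" and inv: "Inv X Y h"
    and pres: "\<And>X Y h'. Inv X Y h' \<Longrightarrow> length h' < length h + Suc (length w) \<Longrightarrow>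
        Inv (upd BB (ys b) (int (P w h')) X) (upd BB (xs b) (int (P w h')) Y) (hx P w h')"
  shows "\<exists>X' Y' h1 h'. Inv X' Y' h1 \<and> length h1 = length h + Suc (length w) \<and>
     length h' = length h + (2 * length w + 3) \<and>
     dpath VV P w (2 * length w + 3) (cf (Str b r False x) 0 X Y h) (cf (nextS b r x) 0 X' Y' h')"
proof -
  obtain X' Y' h1 where a: "Inv X' Y' h1" "length h1 = length h + Suc (length w)"
     "dpath VV P w (Suc (length w)) (cf (Str b r False x) 0 X Y h) (cf (Str b r False x) (Suc (length w)) X' Y' h1)"
    using fwd_run[where Inv=Inv and P=P and w=w and b=b and p=0 and k="Suc (length w)", OF g r _ inv pres] by auto
  have l2: "dlink VV P w (cf (Str b r False x) (Suc (length w)) X' Y' h1) (cf (Str b r True x) (length w) X' Y' (hx P w h1))"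
    by (rule st_turn[OF g r])
  obtain h2 where b: "length h2 = length (hx P w h1) + length w"
     "dpath VV P w (length w) (cf (Str b r True x) (length w) X' Y' (hx P w h1)) (cf (Str b r True x) 0 X' Y' h2)"
    using rew_run[where P=P and w=w and b=b and X=X' and Y=Y' and h="hx P w h1" and p="length w", OF g r] by auto
  have l4: "dlink VV P w (cf (Str b r True x) 0 X' Y' h2) (cf (nextS b r x) 0 X' Y' (hx P w h2))"
    by (rule st_rew_end[OF g r])
  have dp0: "dpath VV P w (Suc (length w) + (1 + (length w + 1))) (cf (Str b r False x) 0 X Y h) (cf (nextS b r x) 0 X' Y' (hx P w h2))"
    by (intro dpath_trans[OF a(3)] dpath_trans[OF dpath_one[OF l2]] dpath_trans[OF b(2)] dpath_one[OF l4])
  have eqn: "Suc (length w) + (1 + (length w + 1)) = 2 * length w + 3" by simp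
  have dp: "dpath VV P w (2 * length w + 3) (cf (Str b r False x) 0 X Y h) (cf (nextS b r x) 0 X' Y' (hx P w h2))"
    using dp0 unfolding eqn .
  have len: "length (hx P w h2) = length h + (2 * length w + 3)" using a(2) b(1) by simp
  show ?thesis using a(1,2) len dp by blast
qed

lemma stream_run_s:
  assumes g: "goodctx x" and r: "r \<le> K" and inv: "Inv X Y"
    and pres: "\<And>X Y c. Inv X Y \<Longrightarrow> Inv (upd BB (ys b) c X) (upd BB (xs b) c Y)"
    and rK: "r < K"
  shows "\<exists>X' Y' h'. Inv X' Y' \<and>
     dpath VV P w ((K - r) * (2 * length w + 3)) (cf (Str b r False x) 0 X Y h) (cf (if b then Prp x else SSt x) 0 X' Y' h')"
  using r inv rK
proof (induction "K - r" arbitrary: r X Y h)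
  case 0 then show ?case by simp
next
  case (Suc j)
  obtain X' Y' h1 h' where a: "Inv X' Y'"
     "dpath VV P w (2 * length w + 3) (cf (Str b r False x) 0 X Y h) (cf (nextS b r x) 0 X' Y' h')"
    using pass_run[where Inv="\<lambda>X Y h. Inv X Y" and P=P and w=w and b=b and X=X and Y=Y and h=h, OF g Suc.prems(3) Suc.prems(2) pres] by blast
  show ?case
  proof (cases "Suc r < K")
    case True
    then have ns: "nextS b r x = Str b (Suc r) False x" by (simp add: nextS_def)
    obtain X'' Y'' h'' where b: "Inv X'' Y''"
       "dpath VV P w ((K - Suc r) * (2 * length w + 3)) (cf (Str b (Suc r) False x) 0 X' Y' h') (cf (if b then Prp x else SSt x) 0 X'' Y'' h'')"
    proof -
      have "j = K - Suc r" using Suc.hyps(2) by simp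
      then show ?thesis using Suc.hyps(1)[of "Suc r" X' Y' h'] True a(1) that by auto
    qed
    have "dpath VV P w ((2 * length w + 3) + (K - Suc r) * (2 * length w + 3)) (cf (Str b r False x) 0 X Y h) (cf (if b then Prp x else SSt x) 0 X'' Y'' h'')"
      using dpath_trans[OF a(2)[unfolded ns] b(2)] .
    moreover have "(2 * length w + 3) + (K - Suc r) * (2 * length w + 3) = (K - r) * (2 * length w + 3)"
    proof -
      have "K - r = Suc (K - Suc r)" using True by simp
      then show ?thesis by simp
    qed
    ultimately have "dpath VV P w ((K - r) * (2 * length w + 3)) (cf (Str b r False x) 0 X Y h) (cf (if b then Prp x else SSt x) 0 X'' Y'' h'')"
      by simp
    then show ?thesis using b(1) by blast
  next
    case False
    then have ns: "nextS b r x = (if b then Prp x else SSt x)" by (simp add: nextS_def)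
    have "K - r = 1" using False Suc.prems(3) by simp
    then have e: "(K - r) * (2 * length w + 3) = 2 * length w + 3" by simp
    show ?thesis
      by (rule exI[of _ X'], rule exI[of _ Y'], rule exI[of _ h'], rule conjI[OF a(1)])
         (use a(2) in \<open>simp only: e ns\<close>)
  qed
qed

end

context vc begin

lemma weighed_cases: "(\<forall>i. \<not> weighed VV q a c i) \<or> (\<exists>par<2. \<forall>i. weighed VV q a c i \<longleftrightarrow> i = par)"
proof (cases "decs q")
  case (IL pv) then show ?thesis by (cases a) (auto simp: weighed_def VV_def)
next
  case (Str b r rw x) then show ?thesis by (cases x) (auto simp: weighed_def VV_def)
next
  case (Prp x) then show ?thesis by (cases x) (auto simp: weighed_def VV_def)
next
  case (Chk x)
  obtain q' sp d par st where x: "x = Ctx q' sp d par st" by (cases x)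
  show ?thesis
  proof (cases "par < 2")
    case True
    then have "\<forall>i. weighed VV q a c i \<longleftrightarrow> i = par" using Chk x by (auto simp: weighed_def VV_def)
    then show ?thesis using True by blast
  next
    case False
    then show ?thesis using Chk x by (auto simp: weighed_def VV_def)
  qed
qed (auto simp: weighed_def VV_def)

lemma reach_le1: "reach VV S P w n cc \<le> 1"
proof (induction n arbitrary: cc)
  case 0 then show ?case by (cases cc) auto
next
  case (Suc n)
  obtain q p R h where cc: "cc = (q, p, R, h)" by (cases cc)
  let ?a = "tape_at w p" and ?c = "P w h"
  let ?g = "\<lambda>oc. reach VV S P w n (fst (v_trans VV q ?a ?c oc), nat (int p + snd (v_trans VV q ?a ?c oc)),
                   vstep VV q ?a ?c R oc, h @ [(?c, oc)])"
  have sum_le: "(\<Sum>oc\<in>outs VV q ?a ?c. oprob VV q ?a ?c R oc * ?g oc) \<le> 1"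
  proof (cases "\<forall>i. \<not> weighed VV q ?a ?c i")
    case True
    then have outs: "outs VV q ?a ?c = {\<lambda>_. 0}" by (auto simp: outs_def)
    have "oprob VV q ?a ?c R (\<lambda>_. 0) = 1" using True by (simp add: oprob_def)
    then show ?thesis using outs Suc.IH by simp
  next
    case False
    then obtain par where par: "par < 2" "\<And>i. weighed VV q ?a ?c i \<longleftrightarrow> i = par"
      using weighed_cases by blast
    have outs: "outs VV q ?a ?c = ocp par ` {..<5}"
      unfolding outs_def par(2) ocp_image[symmetric] by (simp add: VV_def)
    have inj: "inj_on (ocp par) {..<5}" by (rule inj_onI) (metis ocp_def)
    have wset: "{i. weighed VV q ?a ?c i} = {par}" using par by auto
    let ?D = "\<Sum>j<5. \<bar>R par j\<bar>"
    have op: "oprob VV q ?a ?c R (ocp par u) = \<bar>R par u\<bar> / ?D" for u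
      unfolding oprob_def wset by (simp add: VV_def ocp_def)
    have "(\<Sum>oc\<in>outs VV q ?a ?c. oprob VV q ?a ?c R oc * ?g oc) = (\<Sum>u<5. \<bar>R par u\<bar> / ?D * ?g (ocp par u))"
      unfolding outs by (simp add: sum.reindex[OF inj] op)
    also have "\<dots> \<le> (\<Sum>u<5. \<bar>R par u\<bar> / ?D)"
    proof (rule sum_mono)
      fix u
      have nn: "0 \<le> \<bar>R par u\<bar> / ?D" by simp
      have le: "?g (ocp par u) \<le> 1" by (rule Suc.IH)
      show "\<bar>R par u\<bar> / ?D * ?g (ocp par u) \<le> \<bar>R par u\<bar> / ?D"
        by (rule mult_left_le[OF le nn])
    qed
    also have "\<dots> = ?D / ?D" by (rule sum_divide_distrib[symmetric])
    also have "\<dots> \<le> 1" by (cases "?D = 0") auto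
    finally show ?thesis .
  qed
  show ?case unfolding cc using sum_le by (auto simp: Let_def)
qed

lemma bdd_reach: "bdd_above (range (\<lambda>n. reach VV S P w n cc))"
proof (rule bdd_aboveI[of _ 1])
  fix x assume "x \<in> range (\<lambda>n. reach VV S P w n cc)"
  then obtain n where "x = reach VV S P w n cc" by blast
  then show "x \<le> 1" using reach_le1[of S P w n cc] by simp
qed

end

locale vcs = vc M K for M :: "'a dtm" and K :: nat +
  fixes cs :: nat
  assumes lin: "\<And>w t. \<bar>Hs M w t\<bar> \<le> int cs * (int (length w) + 1)"
    and Kdef: "K = 2 * cs + 2"
begin

definition WW :: "'a list \<Rightarrow> nat" where "WW w = K * (length w + 1)"
definition tL :: "'a list \<Rightarrow> nat \<Rightarrow> int" where "tL w t = Lnum BB (Ts M w t) (Hs M w t) (WW w)"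
definition tR :: "'a list \<Rightarrow> nat \<Rightarrow> int" where "tR w t = Rnum BB (Ts M w t) (Hs M w t) (WW w)"
definition tS :: "'a list \<Rightarrow> nat \<Rightarrow> nat" where "tS w t = Ts M w t (Hs M w t)"
definition pend :: "'a list \<Rightarrow> nat \<Rightarrow> nat \<times> nat" where
  "pend w t = (if t = 0 then (Ts M w 0 0, 0) else
     (case tm_delta M (Qs M w (t - 1)) (tS w (t - 1)) of (q', s', d') \<Rightarrow> (s', dcode d')))"

lemma blank: assumes "\<bar>j - Hs M w t\<bar> \<ge> int (WW w)" shows "Ts M w t j = 0"
proof (rule ccontr)
  assume "Ts M w t j \<noteq> 0"
  then have j: "- (int cs * (int (length w) + 1)) \<le> j \<and> j \<le> int cs * (int (length w) + 1) + int (length w)"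
    using support[of w cs t j] lin by blast
  have h: "\<bar>Hs M w t\<bar> \<le> int cs * (int (length w) + 1)" by (rule lin)
  define A where "A = int cs * (int (length w) + 1)"
  have W: "int (WW w) = 2 * A + 2 * int (length w) + 2" unfolding WW_def by (simp add: Kdef A_def algebra_simps)
  have j': "- A \<le> j" "j \<le> A + int (length w)" using j by (simp_all add: A_def)
  have h': "- A \<le> Hs M w t" "Hs M w t \<le> A" using h by (simp_all add: A_def abs_le_iff)
  from assms W have "j - Hs M w t \<ge> 2 * A + 2 * int (length w) + 2 \<or> Hs M w t - j \<ge> 2 * A + 2 * int (length w) + 2"
    by (simp add: abs_le_iff) linarith
  moreover have "0 \<le> int (length w)" by simp
  ultimately show False using j' h' by (elim disjE) linarith+
qed

lemma WW_pos: "0 < WW w" using Kpos by (simp add: WW_def)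

lemma divuniq:
  fixes a a' x x' :: int
  assumes "0 \<le> a" "a < b" "0 \<le> a'" "a' < b" "a + b * x = a' + b * x'"
  shows "a = a' \<and> x = x'"
proof -
  have "b * (x - x') = a' - a" using assms(5) by (simp add: algebra_simps)
  moreover have "\<bar>a' - a\<bar> < b" using assms by auto
  ultimately have lt: "\<bar>b * (x - x')\<bar> < b" by simp
  have b0: "b > 0" using assms(1,2) by simp
  have "x - x' = 0"
  proof (rule ccontr)
    assume "x - x' \<noteq> 0"
    then have "1 \<le> \<bar>x - x'\<bar>" by linarith
    then have "b * 1 \<le> b * \<bar>x - x'\<bar>" using b0 by (intro mult_left_mono) auto
    also have "\<dots> = \<bar>b * (x - x')\<bar>" using b0 by (simp add: abs_mult)
    finally show False using lt by simp
  qed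
  then show ?thesis using assms(5) by simp
qed

lemma BB_pos: "BB > 0" using nsym_ge2 by (simp add: BB_def)

lemma tS_lt: "tS w t < tm_nsym M" by (simp add: tS_def Ts_lt)

lemma pend_bounds: "fst (pend w t) < tm_nsym M \<and> snd (pend w t) < 3"
proof (cases t)
  case 0 then show ?thesis by (simp add: pend_def Ts_lt)
next
  case (Suc t0)
  obtain q' s' d' where dl: "tm_delta M (Qs M w t0) (tS w t0) = (q', s', d')" by (metis prod_cases3)
  have "s' < tm_nsym M" using delta_bounds[OF Qs_lt tS_lt dl] by simp
  then show ?thesis using Suc dl by (simp add: pend_def dcode_def)
qed

lemma tm_eq:
  assumes nh: "t = 0 \<or> Qs M w (t - 1) \<notin> {tm_acc M, tm_rej M}"
    and X: "X 1 = tL w (t - 1)" "X 2 = tR w (t - 1)"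
    and st: "st < tm_nsym M" "snd (pend w t) = 0 \<longrightarrow> st = fst (pend w t)"
  shows "etest (fst (pend w t)) (snd (pend w t)) st X = (0, 0) \<longleftrightarrow>
           (X 3 = tL w t \<and> X 4 = tR w t \<and> st = tS w t)"
proof (cases t)
  case 0
  have "tS w 0 = Ts M w 0 0" by (simp add: tS_def init_vals)
  then show ?thesis using 0 X st by (auto simp: pend_def etest_def)
next
  case (Suc t0)
  then have nh': "Qs M w t0 \<notin> {tm_acc M, tm_rej M}" using nh by simp
  obtain q' s' d' where dl: "tm_delta M (Qs M w t0) (tS w t0) = (q', s', d')" by (metis prod_cases3)
  have d': "d' \<in> {-1, 0, 1}" using delta_bounds[OF Qs_lt tS_lt dl] by simp
  have s'lt: "s' < tm_nsym M" using delta_bounds[OF Qs_lt tS_lt dl] by simp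
  let ?T = "Ts M w t0" and ?h = "Hs M w t0" and ?W = "WW w"
  have dl': "tm_delta M (Qs M w t0) (?T ?h) = (q', s', d')" using dl by (simp add: tS_def)
  have T1: "Ts M w t = ?T(?h := s')" and H1: "Hs M w t = ?h + d'"
    using step_nothalt[OF nh' dl'] Suc by auto
  have pe: "pend w t = (s', dcode d')" using Suc dl by (simp add: pend_def)
  obtain m where Wm: "?W = Suc m" using WW_pos by (metis gr0_implies_Suc)
  have bl: "\<bar>j - ?h\<bar> \<ge> int ?W \<Longrightarrow> ?T j = 0" for j by (rule blank)
  have Xs: "X 1 = tL w t0" "X 2 = tR w t0" using X Suc by auto
  have B0: "BB > 0" by (rule BB_pos)
  have stB: "0 \<le> int st" "int st < BB" using st(1) by (auto simp: BB_def)
  have TB: "int (Ts M w t' j) < BB" for t' j using Ts_lt by (simp add: BB_def)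
  consider "d' = 0" | "d' = 1" | "d' = -1" using d' by auto
  then show ?thesis
  proof cases
    case 1
    have L: "tL w t = tL w t0" "tR w t = tR w t0" "tS w t = s'"
      using T1 H1 1 by (simp_all add: tL_def tR_def tS_def stepS_L stepS_R)
    have "dcode d' = 0" using 1 by (simp add: dcode_def)
    then show ?thesis using L Xs pe st by (auto simp: etest_def)
  next
    case 2
    have e1: "tL w t = int s' + BB * tL w t0"
    proof -
      have "?T (?h - int (Suc m)) = 0" by (rule bl) (use Wm in simp)
      then show ?thesis using T1 H1 2 Wm by (simp add: tL_def stepR_L)
    qed
    have e2: "int (tS w t) + BB * tR w t = tR w t0"
    proof -
      have "?T (?h + 1 + int ?W) = 0" by (rule bl) simp
      then show ?thesis using T1 H1 2 stepR_R[of ?T ?h ?W BB s'] by (simp add: tR_def tS_def)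
    qed
    have dc: "dcode d' = 1" using 2 by (simp add: dcode_def)
    show ?thesis
    proof
      assume "etest (fst (pend w t)) (snd (pend w t)) st X = (0, 0)"
      then have a: "- BB * X 1 + X 3 - int s' = 0" "- X 2 + BB * X 4 + int st = 0"
        using pe dc by (auto simp: etest_def)
      have "X 3 = tL w t" using a(1) e1 Xs by (simp add: algebra_simps)
      moreover have "int st + BB * X 4 = int (tS w t) + BB * tR w t" using a(2) e2 Xs by simp
      then have "int st = int (tS w t) \<and> X 4 = tR w t"
        by (intro divuniq[of _ BB]) (use stB TB in \<open>auto simp: tS_def\<close>)
      ultimately show "X 3 = tL w t \<and> X 4 = tR w t \<and> st = tS w t" by simp
    next
      assume "X 3 = tL w t \<and> X 4 = tR w t \<and> st = tS w t"
      then show "etest (fst (pend w t)) (snd (pend w t)) st X = (0, 0)"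
        using pe dc e1 e2 Xs by (auto simp: etest_def algebra_simps)
    qed
  next
    case 3
    have e1: "tL w t0 = int (tS w t) + BB * tL w t"
    proof -
      have "?T (?h - 1 - int ?W) = 0" by (rule bl) simp
      then show ?thesis using T1 H1 3 stepL_L[of ?T ?h ?W BB s'] by (simp add: tL_def tS_def)
    qed
    have e2: "tR w t = int s' + BB * tR w t0"
    proof -
      have "?T (?h + int (Suc m)) = 0" by (rule bl) (use Wm in simp)
      then show ?thesis using T1 H1 3 Wm by (simp add: tR_def stepL_R)
    qed
    have dc: "dcode d' = 2" using 3 by (simp add: dcode_def)
    show ?thesis
    proof
      assume "etest (fst (pend w t)) (snd (pend w t)) st X = (0, 0)"
      then have a: "X 1 - BB * X 3 - int st = 0" "- BB * X 2 + X 4 - int s' = 0"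
        using pe dc by (auto simp: etest_def)
      have "X 4 = tR w t" using a(2) e2 Xs by (simp add: algebra_simps)
      moreover have "int st + BB * X 3 = int (tS w t) + BB * tL w t" using a(1) e1 Xs by simp
      then have "int st = int (tS w t) \<and> X 3 = tL w t"
        by (intro divuniq[of _ BB]) (use stB TB in \<open>auto simp: tS_def\<close>)
      ultimately show "X 3 = tL w t \<and> X 4 = tR w t \<and> st = tS w t" by simp
    next
      assume "X 3 = tL w t \<and> X 4 = tR w t \<and> st = tS w t"
      then show "etest (fst (pend w t)) (snd (pend w t)) st X = (0, 0)"
        using pe dc e1 e2 Xs by (auto simp: etest_def algebra_simps)
    qed
  qed
qed

end

context vcs begin

lemma IR_run: "k + p = Suc (length w) \<Longrightarrow>
  \<exists>h'. length h' = length h + k \<and> dpath VV P w k (cf IR p X Y h) (cf IR (Suc (length w)) X Y h')"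
proof (induction k arbitrary: p h)
  case 0 then show ?case by (auto intro: dpath.intros)
next
  case (Suc k)
  have l: "dlink VV P w (cf IR p X Y h) (cf IR (Suc p) X Y (hx P w h))" using st_IR_fwd Suc.prems by simp
  obtain h' where "length h' = length (hx P w h) + k" "dpath VV P w k (cf IR (Suc p) X Y (hx P w h)) (cf IR (Suc (length w)) X Y h')"
    using Suc.IH[of "Suc p" "hx P w h"] Suc.prems by auto
  then show ?case using l by (intro exI[of _ h']) (auto intro: dpath.intros)
qed

lemma Rnum_ext: "(\<And>i. m \<le> i \<Longrightarrow> i < m' \<Longrightarrow> T (h + 1 + int i) = 0) \<Longrightarrow> m \<le> m' \<Longrightarrow> Rnum b T h m' = Rnum b T h m"
proof (induction m')
  case 0 then show ?case by simp
next
  case (Suc m')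
  show ?case
  proof (cases "m = Suc m'")
    case True then show ?thesis by simp
  next
    case False
    then have "m \<le> m'" using Suc.prems by simp
    then show ?thesis using Suc by (simp add: Rnum_top)
  qed
qed

lemma IL_run:
  assumes "j \<le> length w" "X 2 = Rnum BB (Ts M w 0) (int j) (length w - 1 - j)"
  shows "\<exists>X' h'. X' 2 = Rnum BB (Ts M w 0) 0 (length w - 1) \<and> (\<forall>i. i \<noteq> 2 \<longrightarrow> X' i = X i) \<and>
     length h' = length h + j \<and>
     dpath VV P w j (cf (IL (Ts M w 0 (int j))) j X Y h) (cf (IL (Ts M w 0 0)) 0 X' Y h')"
  using assms
proof (induction j arbitrary: X h)
  case 0 then show ?case by (auto intro: dpath.intros)
next
  case (Suc j)
  let ?T = "Ts M w 0"
  let ?X1 = "upd BB 2 (int (?T (int (Suc j)))) X"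
  have jn: "j < length w" using Suc.prems by simp
  have e: "tm_enc M (w ! j) = ?T (int j)" using jn by (simp add: init_vals)
  have l: "dlink VV P w (cf (IL (?T (int (Suc j)))) (Suc j) X Y h) (cf (IL (?T (int j))) j ?X1 Y (hx P w h))"
    using st_IL[where p="Suc j" and w=w and pv="?T (int (Suc j))" and P=P and h=h and X=X and Y=Y] Suc.prems Ts_lt by (simp add: e)
  have x1: "?X1 2 = Rnum BB ?T (int j) (length w - 1 - j)"
  proof (cases "Suc j < length w")
    case True
    then have "length w - 1 - j = Suc (length w - 1 - Suc j)" by simp
    then show ?thesis using Suc.prems(2) by (simp add: upd_def Rnum_shift algebra_simps)
  next
    case False
    then have "Suc j = length w" using Suc.prems by simp
    then show ?thesis using Suc.prems(2) by (simp add: upd_def init_vals Rnum_def)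
  qed
  obtain X' h' where a: "X' 2 = Rnum BB ?T 0 (length w - 1)" "\<forall>i. i \<noteq> 2 \<longrightarrow> X' i = ?X1 i"
     "length h' = length (hx P w h) + j" "dpath VV P w j (cf (IL (?T (int j))) j ?X1 Y (hx P w h)) (cf (IL (?T 0)) 0 X' Y h')"
    using Suc.IH[where X="?X1" and h="hx P w h"] x1 jn by auto
  show ?case
    by (rule exI[of _ X'], rule exI[of _ h']) (use a l in \<open>auto simp: upd_def intro: dpath.intros\<close>)
qed

definition gst :: "'a list \<Rightarrow> nat \<Rightarrow> vst" where
  "gst w t = Str False 0 False (Ctx (Qs M w t) (fst (pend w t)) (snd (pend w t)) (t mod 2) 0)"

definition goodXY :: "'a list \<Rightarrow> nat \<Rightarrow> (nat \<Rightarrow> int) \<Rightarrow> (nat \<Rightarrow> int) \<Rightarrow> bool" where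
  "goodXY w t X Y \<longleftrightarrow> X 1 = tL w (t - 1) \<and> X 2 = tR w (t - 1) \<and> X 3 = 0 \<and> X 4 = 0 \<and>
     Y 1 = 0 \<and> Y 2 = 0 \<and> Y 3 = 0 \<and> Y 4 = 0"

lemma gctx: "goodctx (Ctx (Qs M w t) (fst (pend w t)) (snd (pend w t)) (t mod 2) st) \<longleftrightarrow> st < tm_nsym M"
  using pend_bounds[of w t] Qs_lt by auto

lemma init_run: "\<exists>X h. length h = 2 * length w + 3 \<and> goodXY w 0 X (\<lambda>_. 0) \<and>
   dpath VV P w (2 * length w + 3) (start VV) (cf (gst w 0) 0 X (\<lambda>_. 0) h)"
proof -
  let ?T = "Ts M w 0" and ?n = "length w"
  let ?Z = "\<lambda>_::nat. 0::int"
  obtain h1 where a: "length h1 = Suc ?n" "dpath VV P w (Suc ?n) (cf IR 0 ?Z ?Z []) (cf IR (Suc ?n) ?Z ?Z h1)"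
    using IR_run[where k="Suc ?n" and p=0 and w=w and h="[]" and P=P and X="?Z" and Y="?Z"] by auto
  have l2: "dlink VV P w (cf IR (Suc ?n) ?Z ?Z h1) (cf (IL 0) ?n ?Z ?Z (hx P w h1))" by (rule st_IR_turn)
  have T0n: "?T (int ?n) = 0" by (simp add: init_vals)
  obtain X' h2 where b: "X' 2 = Rnum BB ?T 0 (?n - 1)" "\<forall>i. i \<noteq> 2 \<longrightarrow> X' i = 0"
     "length h2 = length (hx P w h1) + ?n" "dpath VV P w ?n (cf (IL (?T (int ?n))) ?n ?Z ?Z (hx P w h1)) (cf (IL (?T 0)) 0 X' ?Z h2)"
    using IL_run[where j="?n" and X="?Z" and w=w and h="hx P w h1" and P=P and Y="?Z"] by (auto simp: T0n Rnum_def)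
  have l4: "dlink VV P w (cf (IL (?T 0)) 0 X' ?Z h2) (cf (Str False 0 False (Ctx (tm_q0 M) (?T 0) 0 0 0)) 0 X' ?Z (hx P w h2))"
    by (rule st_IL_end) (rule Ts_lt)
  have dp: "dpath VV P w (Suc ?n + (1 + (?n + 1))) (cf IR 0 ?Z ?Z []) (cf (Str False 0 False (Ctx (tm_q0 M) (?T 0) 0 0 0)) 0 X' ?Z (hx P w h2))"
    by (intro dpath_trans[OF a(2)] dpath_trans[OF dpath_one[OF l2]] dpath_trans[OF b(4)[unfolded T0n]] dpath_one[OF l4])
  have eqn: "Suc ?n + (1 + (?n + 1)) = 2 * ?n + 3" by simp
  have g: "gst w 0 = Str False 0 False (Ctx (tm_q0 M) (?T 0) 0 0 0)"
    by (simp add: gst_def pend_def init_vals)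
  have tl0: "tL w 0 = 0"
    unfolding tL_def Lnum_def by (rule sum.neutral) (auto simp: init_vals)
  have tr0: "tR w 0 = Rnum BB ?T 0 (?n - 1)"
    unfolding tR_def init_vals(2) proof (rule Rnum_ext)
    have a: "1 * ?n \<le> K * ?n" using Kpos by (intro mult_right_mono) auto
    have b: "WW w = K * ?n + K" unfolding WW_def by (simp add: algebra_simps)
    show "?n - 1 \<le> WW w" using a b by linarith
  qed (auto simp: init_vals)
  have "goodXY w 0 X' ?Z" using b(1,2) tl0 tr0 by (simp add: goodXY_def)
  moreover have "length (hx P w h2) = 2 * ?n + 3" using a(1) b(3) by simp
  ultimately show ?thesis using dp unfolding eqn start_cf g by blast
qed

end

context vcs begin

lemma dpath_rej_ge:
  assumes "dpath VV P w N c c'" "reach VV (v_rej VV) P w m c' \<ge> r"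
  shows "\<exists>m. reach VV (v_rej VV) P w m c \<ge> r"
  using dpath_reach[OF assms(1), of "v_rej VV" m] assms(2) by (intro exI[of _ "m + N"]) (auto simp: hs_def)

lemma mod2_suc: "Suc t mod 2 = 1 - t mod 2" by (cases "t mod 2 = 0") (auto simp: mod_Suc)

lemma round_s:
  assumes nh: "t = 0 \<or> Qs M w (t - 1) \<notin> {tm_acc M, tm_rej M}" and g: "goodXY w t X Y"
  shows "(\<exists>m. reach VV (v_rej VV) P w m (cf (gst w t) 0 X Y h) \<ge> 2/3) \<or>
    (\<exists>N Y2 h2. dpath VV P w N (cf (gst w t) 0 X Y h)
        (cf (Chk (Ctx (Qs M w t) (fst (pend w t)) (snd (pend w t)) (t mod 2) (tS w t))) 0 (tv 0 0) Y2 h2) \<and>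
       Y2 1 = tL w t \<and> Y2 2 = tR w t \<and> Y2 3 = 0 \<and> Y2 4 = 0)"
proof -
  define q where "q = Qs M w t"
  define sp where "sp = fst (pend w t)"
  define d where "d = snd (pend w t)"
  define par where "par = t mod 2"
  define a1 where "a1 = tL w (t - 1)"
  define a2 where "a2 = tR w (t - 1)"
  have gs: "gst w t = Str False 0 False (Ctx q sp d par 0)" by (simp add: gst_def q_def sp_def d_def par_def)
  have g0: "goodctx (Ctx q sp d par 0)" using gctx[of w t 0] nsym_ge2 by (simp add: q_def sp_def d_def par_def)
  let ?InvL = "\<lambda>X Y. X 1 = a1 \<and> X 2 = a2 \<and> X 4 = 0 \<and> Y 2 = 0 \<and> Y 3 = 0 \<and> Y 4 = 0 \<and> X 3 = Y 1"
  have iL: "?InvL X Y" using g by (simp add: goodXY_def a1_def a2_def)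
  obtain X1 Y1 h1 where s1: "?InvL X1 Y1"
     "dpath VV P w ((K - 0) * (2 * length w + 3)) (cf (Str False 0 False (Ctx q sp d par 0)) 0 X Y h) (cf (SSt (Ctx q sp d par 0)) 0 X1 Y1 h1)"
    using stream_run_s[where Inv="?InvL" and b=False and r=0 and x="Ctx q sp d par 0" and P=P and w=w and X=X and Y=Y and h=h,
        OF g0 _ iL _ Kpos] by (auto simp: upd_def ys_def xs_def)
  let ?c = "P w h1"
  show ?thesis
  proof (cases "?c < tm_nsym M \<and> (d = 0 \<longrightarrow> ?c = sp)")
    case False
    have "reach VV (v_rej VV) P w (Suc 0) (cf (SSt (Ctx q sp d par 0)) 0 X1 Y1 h1) = 1"
      by (rule st_S_bad[where P=P and w=w and h=h1, OF g0 False])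
    then have "\<exists>m. reach VV (v_rej VV) P w m (cf (Str False 0 False (Ctx q sp d par 0)) 0 X Y h) \<ge> 2/3"
      using dpath_rej_ge[OF s1(2), where m="Suc 0" and r="2/3"] by simp
    then show ?thesis using gs by simp
  next
    case True
    define x1 where "x1 = Ctx q sp d par ?c"
    have g1: "goodctx x1" using g0 True by (simp add: x1_def)
    have l2: "dlink VV P w (cf (SSt (Ctx q sp d par 0)) 0 X1 Y1 h1) (cf (Str True 0 False x1) 0 X1 Y1 (hx P w h1))"
      unfolding x1_def by (rule st_S_ok) (use g0 True in auto)
    let ?InvR = "\<lambda>X Y. X 1 = a1 \<and> X 2 = a2 \<and> Y 3 = 0 \<and> Y 4 = 0 \<and> X 3 = Y 1 \<and> X 4 = Y 2"
    have iR: "?InvR X1 Y1" using s1(1) by simp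
    obtain X2 Y2 h2 where s3: "?InvR X2 Y2"
       "dpath VV P w ((K - 0) * (2 * length w + 3)) (cf (Str True 0 False x1) 0 X1 Y1 (hx P w h1)) (cf (Prp x1) 0 X2 Y2 h2)"
      using stream_run_s[where Inv="?InvR" and b=True and r=0 and x=x1 and P=P and w=w and X=X1 and Y=Y1 and h="hx P w h1",
          OF g1 _ iR _ Kpos] by (auto simp: upd_def ys_def xs_def)
    define E where "E = etest sp d ?c X2"
    have l4: "dlink VV P w (cf (Prp x1) 0 X2 Y2 h2) (cf (Chk x1) 0 (tv (fst E) (snd E)) Y2 (hx P w h2))"
      unfolding x1_def E_def by (rule st_Prp) (use g1 in \<open>simp add: x1_def\<close>)
    have dp: "dpath VV P w ((K - 0) * (2 * length w + 3) + (1 + ((K - 0) * (2 * length w + 3) + 1)))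
       (cf (gst w t) 0 X Y h) (cf (Chk x1) 0 (tv (fst E) (snd E)) Y2 (hx P w h2))"
      unfolding gs by (intro dpath_trans[OF s1(2)] dpath_trans[OF dpath_one[OF l2]] dpath_trans[OF s3(2)] dpath_one[OF l4])
    have X2: "X2 1 = tL w (t - 1)" "X2 2 = tR w (t - 1)" using s3(1) by (simp_all add: a1_def a2_def)
    have stc: "?c < tm_nsym M" "snd (pend w t) = 0 \<longrightarrow> ?c = fst (pend w t)" using True by (auto simp: d_def sp_def)
    show ?thesis
    proof (cases "E = (0, 0)")
      case False
      then have "fst E \<noteq> 0 \<or> snd E \<noteq> 0" by (cases E) auto
      then have "reach VV (v_rej VV) P w (Suc 0) (cf (Chk x1) 0 (tv (fst E) (snd E)) Y2 (hx P w h2)) \<ge> 2/3"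
        unfolding x1_def by (intro chk_fail) (use g1 in \<open>simp_all add: x1_def\<close>)
      then show ?thesis using dpath_rej_ge[OF dp] by blast
    next
      case True
      then have eq: "X2 3 = tL w t \<and> X2 4 = tR w t \<and> ?c = tS w t"
        using tm_eq[OF nh X2 stc] by (simp add: E_def sp_def d_def)
      have "cf (Chk x1) 0 (tv (fst E) (snd E)) Y2 (hx P w h2) =
         cf (Chk (Ctx (Qs M w t) (fst (pend w t)) (snd (pend w t)) (t mod 2) (tS w t))) 0 (tv 0 0) Y2 (hx P w h2)"
        using True eq by (simp add: x1_def q_def sp_def d_def par_def)
      then show ?thesis using dp s3(1) eq by (intro disjI2) auto
    qed
  qed
qed

lemma sound_main:
  assumes TR: "Qs M w T = tm_rej M" and TN: "\<forall>t<T. Qs M w t \<notin> {tm_acc M, tm_rej M}"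
  shows "t \<le> T \<Longrightarrow> goodXY w t X Y \<Longrightarrow> \<exists>m. reach VV (v_rej VV) P w m (cf (gst w t) 0 X Y h) \<ge> 2/3"
proof (induction "T - t" arbitrary: t X Y h rule: less_induct)
  case less
  have nh: "t = 0 \<or> Qs M w (t - 1) \<notin> {tm_acc M, tm_rej M}" using TN less.prems(1) by auto
  from round_s[OF nh less.prems(2), of P h] show ?case
  proof
    assume "\<exists>N Y2 h2. dpath VV P w N (cf (gst w t) 0 X Y h)
        (cf (Chk (Ctx (Qs M w t) (fst (pend w t)) (snd (pend w t)) (t mod 2) (tS w t))) 0 (tv 0 0) Y2 h2) \<and>
       Y2 1 = tL w t \<and> Y2 2 = tR w t \<and> Y2 3 = 0 \<and> Y2 4 = 0"
    then obtain N Y2 h2 where dp: "dpath VV P w N (cf (gst w t) 0 X Y h)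
        (cf (Chk (Ctx (Qs M w t) (fst (pend w t)) (snd (pend w t)) (t mod 2) (tS w t))) 0 (tv 0 0) Y2 h2)"
       and Y2: "Y2 1 = tL w t" "Y2 2 = tR w t" "Y2 3 = 0" "Y2 4 = 0" by blast
    have gc: "goodctx (Ctx (Qs M w t) (fst (pend w t)) (snd (pend w t)) (t mod 2) (tS w t))"
      using gctx tS_lt by blast
    show ?case
    proof (cases "t = T")
      case True
      then have "Qs M w t = tm_rej M" using TR by simp
      then have "reach VV (v_rej VV) P w (Suc 0) (cf (Chk (Ctx (Qs M w t) (fst (pend w t)) (snd (pend w t)) (t mod 2) (tS w t))) 0 (tv 0 0) Y2 h2) = 1"
        using chk_ok_rej gc by simp
      then show ?thesis using dpath_rej_ge[OF dp, where m="Suc 0" and r="2/3"] by simp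
    next
      case False
      then have tT: "t < T" using less.prems(1) by simp
      then have nht: "Qs M w t \<notin> {tm_acc M, tm_rej M}" using TN by blast
      obtain q' s' d' where dl: "tm_delta M (Qs M w t) (tS w t) = (q', s', d')" by (metis prod_cases3)
      have l: "dlink VV P w (cf (Chk (Ctx (Qs M w t) (fst (pend w t)) (snd (pend w t)) (t mod 2) (tS w t))) 0 (tv 0 0) Y2 h2)
          (cf (Str False 0 False (Ctx q' s' (dcode d') (1 - t mod 2) 0)) 0 Y2 (\<lambda>_. 0) (hx P w h2))"
        by (rule chk_ok_cont[OF gc _ _ dl]) (use nht in auto)
      have dl': "tm_delta M (Qs M w t) (Ts M w t (Hs M w t)) = (q', s', d')" using dl by (simp add: tS_def)
      have "gst w (Suc t) = Str False 0 False (Ctx q' s' (dcode d') (1 - t mod 2) 0)"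
        using step_nothalt(1)[OF nht dl'] dl by (simp add: gst_def pend_def mod2_suc)
      then have dp2: "dpath VV P w (N + 1) (cf (gst w t) 0 X Y h) (cf (gst w (Suc t)) 0 Y2 (\<lambda>_. 0) (hx P w h2))"
        using dpath_trans[OF dp dpath_one[OF l]] by simp
      have "goodXY w (Suc t) Y2 (\<lambda>_. 0)" using Y2 by (simp add: goodXY_def)
      then obtain m where "reach VV (v_rej VV) P w m (cf (gst w (Suc t)) 0 Y2 (\<lambda>_. 0) (hx P w h2)) \<ge> 2/3"
        using less.hyps[of "Suc t"] tT by fastforce
      then show ?thesis using dpath_rej_ge[OF dp2] by blast
    qed
  qed
qed

lemma rej_prob_ge:
  assumes TR: "Qs M w T = tm_rej M" and TN: "\<forall>t<T. Qs M w t \<notin> {tm_acc M, tm_rej M}"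
  shows "rej_prob VV P w \<ge> 2/3"
proof -
  obtain X h where a: "goodXY w 0 X (\<lambda>_. 0)"
     "dpath VV P w (2 * length w + 3) (start VV) (cf (gst w 0) 0 X (\<lambda>_. 0) h)"
    using init_run by blast
  obtain m where "reach VV (v_rej VV) P w m (cf (gst w 0) 0 X (\<lambda>_. 0) h) \<ge> 2/3"
    using sound_main[OF TR TN _ a(1), of P h] by auto
  then obtain m' where m': "reach VV (v_rej VV) P w m' (start VV) \<ge> 2/3"
    using dpath_rej_ge[OF a(2)] by blast
  have "reach VV (v_rej VV) P w m' (start VV) \<le> rej_prob VV P w"
    unfolding rej_prob_def by (rule cSUP_upper[OF _ bdd_reach]) simp
  then show ?thesis using m' by linarith
qed

end

context vcs begin

definition Pp :: "'a list \<Rightarrow> nat" where "Pp w = 2 * length w + 3"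
definition CC :: "'a list \<Rightarrow> nat" where "CC w = 2 * K * Pp w + 3"

definition hmsg :: "'a list \<Rightarrow> nat \<Rightarrow> nat" where
  "hmsg w i = (if i < Pp w then 0 else
     (let t = (i - Pp w) div CC w; u = (i - Pp w) mod CC w in
      if u < K * Pp w then
        (if u mod Pp w \<le> length w then Ts M w t (Hs M w t - int (WW w) + int ((u div Pp w) * (length w + 1) + u mod Pp w)) else 0)
      else if u = K * Pp w then tS w t
      else if u < 2 * K * Pp w + 1 then
        (let u' = u - K * Pp w - 1 in
         if u' mod Pp w \<le> length w then Ts M w t (Hs M w t + int (WW w) - int ((u' div Pp w) * (length w + 1) + u' mod Pp w)) else 0)
      else 0))"

definition hp :: "'a prover" where "hp w h = hmsg w (length h)"

lemma hmsg_lt: "hmsg w i < tm_nsym M"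
  unfolding hmsg_def Let_def using Ts_lt tS_lt nsym_ge2 by auto

lemma divmod_aux: "x < (c::nat) \<Longrightarrow> (t * c + x) div c = t \<and> (t * c + x) mod c = x"
  by (simp add: add.commute)

lemma hmsg_L: assumes "r < K" "j \<le> length w"
  shows "hmsg w (Pp w + t * CC w + r * Pp w + j) = Ts M w t (Hs M w t - int (WW w) + int (r * (length w + 1) + j))"
proof -
  have jP: "j < Pp w" using assms by (simp add: Pp_def)
  have "r * Pp w + j < K * Pp w"
  proof -
    have "r * Pp w + j < r * Pp w + Pp w" using jP by simp
    also have "\<dots> = Suc r * Pp w" by simp
    also have "\<dots> \<le> K * Pp w" using assms(1) by (intro mult_right_mono) auto
    finally show ?thesis .
  qed
  moreover have "K * Pp w < CC w" by (simp add: CC_def)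
  ultimately have lt: "r * Pp w + j < CC w" by linarith
  have e: "Pp w + t * CC w + r * Pp w + j - Pp w = t * CC w + (r * Pp w + j)" by simp
  have d1: "(t * CC w + (r * Pp w + j)) div CC w = t" "(t * CC w + (r * Pp w + j)) mod CC w = r * Pp w + j"
    using divmod_aux[OF lt] by auto
  have d2: "(r * Pp w + j) div Pp w = r" "(r * Pp w + j) mod Pp w = j"
    using divmod_aux[OF jP, of r] by auto
  show ?thesis unfolding hmsg_def Let_def e d1 d2
    using \<open>r * Pp w + j < K * Pp w\<close> assms(2) by simp
qed

lemma hmsg_S: "hmsg w (Pp w + t * CC w + K * Pp w) = tS w t"
proof -
  have lt: "K * Pp w < CC w" by (simp add: CC_def)
  have e: "Pp w + t * CC w + K * Pp w - Pp w = t * CC w + K * Pp w" by simp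
  show ?thesis unfolding hmsg_def Let_def e using divmod_aux[OF lt, of t] by simp
qed

lemma hmsg_R: assumes "r < K" "j \<le> length w"
  shows "hmsg w (Pp w + t * CC w + K * Pp w + 1 + r * Pp w + j) = Ts M w t (Hs M w t + int (WW w) - int (r * (length w + 1) + j))"
proof -
  have jP: "j < Pp w" using assms by (simp add: Pp_def)
  have rl: "r * Pp w + j < K * Pp w"
  proof -
    have "r * Pp w + j < r * Pp w + Pp w" using jP by simp
    also have "\<dots> = Suc r * Pp w" by simp
    also have "\<dots> \<le> K * Pp w" using assms(1) by (intro mult_right_mono) auto
    finally show ?thesis .
  qed
  let ?x = "K * Pp w + 1 + (r * Pp w + j)"
  have lt: "?x < CC w" using rl by (simp add: CC_def)
  have e: "Pp w + t * CC w + K * Pp w + 1 + r * Pp w + j - Pp w = t * CC w + ?x" by simp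
  have d1: "(t * CC w + ?x) div CC w = t" "(t * CC w + ?x) mod CC w = ?x"
    using divmod_aux[OF lt] by auto
  have d2: "(r * Pp w + j) div Pp w = r" "(r * Pp w + j) mod Pp w = j"
    using divmod_aux[OF jP, of r] by auto
  have e2: "?x - K * Pp w - 1 = r * Pp w + j" by simp
  have c1: "\<not> ?x < K * Pp w" "?x \<noteq> K * Pp w" "?x < 2 * K * Pp w + 1" using rl by auto
  show ?thesis unfolding hmsg_def Let_def e d1 e2 d2 using c1 assms(2) by simp
qed

lemma stream_run_c:
  assumes g: "goodctx x" and rK: "r \<le> K" and len: "length h = L0 + r * Pp w"
    and msg: "\<And>h' r' j. r' < K \<Longrightarrow> j \<le> length w \<Longrightarrow> length h' = L0 + r' * Pp w + j \<Longrightarrow>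
        int (P w h') = D (r' * (length w + 1) + j)"
    and X: "X (ys b) = hor BB D (r * (length w + 1))" and Y: "Y (xs b) = hor BB D (r * (length w + 1))"
    and r0: "r < K"
  shows "\<exists>X' Y' h'. length h' = L0 + K * Pp w \<and> X' (ys b) = hor BB D (K * (length w + 1)) \<and>
     Y' (xs b) = hor BB D (K * (length w + 1)) \<and> (\<forall>i. i \<noteq> ys b \<longrightarrow> X' i = X i) \<and> (\<forall>i. i \<noteq> xs b \<longrightarrow> Y' i = Y i) \<and>
     dpath VV P w ((K - r) * Pp w) (cf (Str b r False x) 0 X Y h) (cf (if b then Prp x else SSt x) 0 X' Y' h')"
  using rK len X Y r0
proof (induction "K - r" arbitrary: r X Y h)
  case 0 then show ?case by simp
next
  case (Suc jj)
  let ?n = "length w"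
  define Inv where "Inv = (\<lambda>X' Y' (h'::hist). length h \<le> length h' \<and> length h' \<le> length h + (?n + 1) \<and>
     X' (ys b) = hor BB D (r * (?n + 1) + (length h' - length h)) \<and>
     Y' (xs b) = hor BB D (r * (?n + 1) + (length h' - length h)) \<and>
     (\<forall>i. i \<noteq> ys b \<longrightarrow> X' i = X i) \<and> (\<forall>i. i \<noteq> xs b \<longrightarrow> Y' i = Y i))"
  have i0: "Inv X Y h" using Suc.prems by (simp add: Inv_def)
  have pres: "Inv (upd BB (ys b) (int (P w h')) X') (upd BB (xs b) (int (P w h')) Y') (hx P w h')"
    if "Inv X' Y' h'" "length h' < length h + Suc ?n" for X' Y' h'
  proof -
    let ?j = "length h' - length h"
    have jn: "?j \<le> ?n" using that by (simp add: Inv_def)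
    have lh: "length h' = L0 + r * Pp w + ?j" using that Suc.prems(2) by (simp add: Inv_def)
    have m: "int (P w h') = D (r * (?n + 1) + ?j)" by (rule msg[OF Suc.prems(5) jn lh])
    have "length h \<le> length h'" using that by (simp add: Inv_def)
    then have "Suc (length h') - length h = Suc ?j" by (rule Suc_diff_le)
    then show ?thesis using that m by (auto simp: Inv_def upd_def)
  qed
  obtain X1 Y1 h1 h' where a: "Inv X1 Y1 h1" "length h1 = length h + Suc ?n" "length h' = length h + (2 * ?n + 3)"
     "dpath VV P w (2 * ?n + 3) (cf (Str b r False x) 0 X Y h) (cf (nextS b r x) 0 X1 Y1 h')"
    using pass_run[where Inv=Inv and P=P and w=w and b=b and X=X and Y=Y and h=h, OF g Suc.prems(5) i0 pres] by blast
  have X1: "X1 (ys b) = hor BB D (Suc r * (?n + 1))" "Y1 (xs b) = hor BB D (Suc r * (?n + 1))"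
    "\<forall>i. i \<noteq> ys b \<longrightarrow> X1 i = X i" "\<forall>i. i \<noteq> xs b \<longrightarrow> Y1 i = Y i"
    using a(1,2) by (auto simp: Inv_def algebra_simps)
  have lh': "length h' = L0 + Suc r * Pp w" using a(3) Suc.prems(2) by (simp add: Pp_def)
  show ?case
  proof (cases "Suc r < K")
    case True
    then have ns: "nextS b r x = Str b (Suc r) False x" by (simp add: nextS_def)
    obtain X' Y' h'' where b: "length h'' = L0 + K * Pp w" "X' (ys b) = hor BB D (K * (?n + 1))"
       "Y' (xs b) = hor BB D (K * (?n + 1))" "\<forall>i. i \<noteq> ys b \<longrightarrow> X' i = X1 i" "\<forall>i. i \<noteq> xs b \<longrightarrow> Y' i = Y1 i"
       "dpath VV P w ((K - Suc r) * Pp w) (cf (Str b (Suc r) False x) 0 X1 Y1 h') (cf (if b then Prp x else SSt x) 0 X' Y' h'')"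
    proof -
      have "jj = K - Suc r" using Suc.hyps(2) by simp
      then show ?thesis using Suc.hyps(1)[where r="Suc r" and X=X1 and Y=Y1 and h=h'] True lh' X1(1,2) that by auto
    qed
    have "dpath VV P w (Pp w + (K - Suc r) * Pp w) (cf (Str b r False x) 0 X Y h) (cf (if b then Prp x else SSt x) 0 X' Y' h'')"
      using dpath_trans[OF a(4)[unfolded ns] b(6)] by (simp add: Pp_def)
    moreover have "Pp w + (K - Suc r) * Pp w = (K - r) * Pp w"
    proof -
      have "K - r = Suc (K - Suc r)" using True by simp
      then show ?thesis by simp
    qed
    ultimately show ?thesis using b(1-5) X1(3,4) by (intro exI[of _ X'] exI[of _ Y'] exI[of _ h'']) auto
  next
    case False
    then have ns: "nextS b r x = (if b then Prp x else SSt x)" and Kr: "K = Suc r" using Suc.prems(5)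
      by (auto simp: nextS_def)
    have "dpath VV P w ((K - r) * Pp w) (cf (Str b r False x) 0 X Y h) (cf (if b then Prp x else SSt x) 0 X1 Y1 h')"
      using a(4) ns Kr by (simp add: Pp_def)
    then show ?thesis using X1 lh' Kr by (intro exI[of _ X1] exI[of _ Y1] exI[of _ h']) auto
  qed
qed

end

context vcs begin

lemma pend_d0:
  assumes nh: "t = 0 \<or> Qs M w (t - 1) \<notin> {tm_acc M, tm_rej M}" and d0: "snd (pend w t) = 0"
  shows "tS w t = fst (pend w t)"
proof (cases t)
  case 0 then show ?thesis by (simp add: pend_def tS_def init_vals)
next
  case (Suc t0)
  then have nh': "Qs M w t0 \<notin> {tm_acc M, tm_rej M}" using nh by simp
  obtain q' s' d' where dl: "tm_delta M (Qs M w t0) (tS w t0) = (q', s', d')" by (metis prod_cases3)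
  have d': "d' \<in> {-1, 0, 1}" using delta_bounds[OF Qs_lt tS_lt dl] by simp
  have dl': "tm_delta M (Qs M w t0) (Ts M w t0 (Hs M w t0)) = (q', s', d')" using dl by (simp add: tS_def)
  have pe: "pend w t = (s', dcode d')" using Suc dl by (simp add: pend_def)
  then have "d' = 0" using d0 d' by (auto simp: dcode_def)
  then show ?thesis using step_nothalt[OF nh' dl'] Suc pe by (simp add: tS_def)
qed

lemma WW_eq: "WW w = K * (length w + 1)" by (simp add: WW_def)

lemma round_c:
  assumes nh: "t = 0 \<or> Qs M w (t - 1) \<notin> {tm_acc M, tm_rej M}" and g: "goodXY w t X Y"
    and len: "length h = Pp w + t * CC w"
  shows "\<exists>Y2 h2. length h2 = Pp w + t * CC w + (CC w - 1) \<and>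
    dpath VV hp w (CC w - 1) (cf (gst w t) 0 X Y h)
        (cf (Chk (Ctx (Qs M w t) (fst (pend w t)) (snd (pend w t)) (t mod 2) (tS w t))) 0 (tv 0 0) Y2 h2) \<and>
    Y2 1 = tL w t \<and> Y2 2 = tR w t \<and> Y2 3 = 0 \<and> Y2 4 = 0"
proof -
  define q where "q = Qs M w t"
  define sp where "sp = fst (pend w t)"
  define d where "d = snd (pend w t)"
  define par where "par = t mod 2"
  define L0 where "L0 = Pp w + t * CC w"
  define DL where "DL = (\<lambda>k::nat. int (Ts M w t (Hs M w t - int (WW w) + int k)))"
  define DR where "DR = (\<lambda>k::nat. int (Ts M w t (Hs M w t + int (WW w) - int k)))"
  have gs: "gst w t = Str False 0 False (Ctx q sp d par 0)" by (simp add: gst_def q_def sp_def d_def par_def)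
  have g0: "goodctx (Ctx q sp d par 0)" using gctx[of w t 0] nsym_ge2 by (simp add: q_def sp_def d_def par_def)
  have gX: "X 1 = tL w (t - 1)" "X 2 = tR w (t - 1)" "X 3 = 0" "X 4 = 0" "Y 1 = 0" "Y 2 = 0" "Y 3 = 0" "Y 4 = 0"
    using g by (auto simp: goodXY_def)
  obtain X1 Y1 h1 where s1: "length h1 = L0 + K * Pp w" "X1 3 = hor BB DL (K * (length w + 1))"
      "Y1 1 = hor BB DL (K * (length w + 1))" "\<forall>i. i \<noteq> 3 \<longrightarrow> X1 i = X i" "\<forall>i. i \<noteq> 1 \<longrightarrow> Y1 i = Y i"
      "dpath VV hp w ((K - 0) * Pp w) (cf (Str False 0 False (Ctx q sp d par 0)) 0 X Y h) (cf (SSt (Ctx q sp d par 0)) 0 X1 Y1 h1)"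
  proof -
    have "\<exists>X' Y' h'. length h' = L0 + K * Pp w \<and> X' (ys False) = hor BB DL (K * (length w + 1)) \<and>
     Y' (xs False) = hor BB DL (K * (length w + 1)) \<and> (\<forall>i. i \<noteq> ys False \<longrightarrow> X' i = X i) \<and> (\<forall>i. i \<noteq> xs False \<longrightarrow> Y' i = Y i) \<and>
     dpath VV hp w ((K - 0) * Pp w) (cf (Str False 0 False (Ctx q sp d par 0)) 0 X Y h) (cf (if False then Prp (Ctx q sp d par 0) else SSt (Ctx q sp d par 0)) 0 X' Y' h')"
    proof (rule stream_run_c[OF g0])
      fix h' :: hist and r' j assume "r' < K" "j \<le> length w" "length h' = L0 + r' * Pp w + j"
      then show "int (hp w h') = DL (r' * (length w + 1) + j)"
        using hmsg_L[of r' j w t] by (simp add: hp_def DL_def L0_def)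
    qed (use len gX Kpos in \<open>auto simp: L0_def ys_def xs_def\<close>)
    then show ?thesis using that by (auto simp: ys_def xs_def)
  qed
  have tL: "hor BB DL (K * (length w + 1)) = tL w t" unfolding DL_def tL_def WW_eq[symmetric] by (rule hor_L)
  have tR: "hor BB DR (K * (length w + 1)) = tR w t" unfolding DR_def tR_def WW_eq[symmetric] by (rule hor_R)
  have m1: "hp w h1 = tS w t" using hmsg_S[of w t] s1(1) by (simp add: hp_def L0_def)
  have d0: "d = 0 \<longrightarrow> tS w t = sp" using pend_d0[OF nh] by (auto simp: d_def sp_def)
  define x1 where "x1 = Ctx q sp d par (tS w t)"
  have g1: "goodctx x1" using g0 tS_lt by (simp add: x1_def)
  have l2: "dlink VV hp w (cf (SSt (Ctx q sp d par 0)) 0 X1 Y1 h1) (cf (Str True 0 False x1) 0 X1 Y1 (hx hp w h1))"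
    unfolding x1_def m1[symmetric] by (rule st_S_ok) (use g0 m1 tS_lt d0 in auto)
  obtain X2 Y2 h2 where s3: "length h2 = (L0 + K * Pp w + 1) + K * Pp w" "X2 4 = hor BB DR (K * (length w + 1))"
      "Y2 2 = hor BB DR (K * (length w + 1))" "\<forall>i. i \<noteq> 4 \<longrightarrow> X2 i = X1 i" "\<forall>i. i \<noteq> 2 \<longrightarrow> Y2 i = Y1 i"
      "dpath VV hp w ((K - 0) * Pp w) (cf (Str True 0 False x1) 0 X1 Y1 (hx hp w h1)) (cf (Prp x1) 0 X2 Y2 h2)"
  proof -
    have "\<exists>X' Y' h'. length h' = (L0 + K * Pp w + 1) + K * Pp w \<and> X' (ys True) = hor BB DR (K * (length w + 1)) \<and>
     Y' (xs True) = hor BB DR (K * (length w + 1)) \<and> (\<forall>i. i \<noteq> ys True \<longrightarrow> X' i = X1 i) \<and> (\<forall>i. i \<noteq> xs True \<longrightarrow> Y' i = Y1 i) \<and>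
     dpath VV hp w ((K - 0) * Pp w) (cf (Str True 0 False x1) 0 X1 Y1 (hx hp w h1)) (cf (if True then Prp x1 else SSt x1) 0 X' Y' h')"
    proof (rule stream_run_c[OF g1])
      fix h' :: hist and r' j assume "r' < K" "j \<le> length w" "length h' = (L0 + K * Pp w + 1) + r' * Pp w + j"
      then show "int (hp w h') = DR (r' * (length w + 1) + j)"
        using hmsg_R[of r' j w t] by (simp add: hp_def DR_def L0_def add.assoc)
    qed (use s1 gX Kpos in \<open>auto simp: ys_def xs_def\<close>)
    then show ?thesis using that by (auto simp: ys_def xs_def)
  qed
  have X2: "X2 1 = tL w (t - 1)" "X2 2 = tR w (t - 1)" "X2 3 = tL w t" "X2 4 = tR w t"
    using s1(2,4) s3(2,4) gX tL tR by auto
  have Y2: "Y2 1 = tL w t" "Y2 2 = tR w t" "Y2 3 = 0" "Y2 4 = 0"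
    using s1(3,5) s3(3,5) gX tL tR by auto
  have E: "etest sp d (tS w t) X2 = (0, 0)"
    using tm_eq[OF nh X2(1,2) tS_lt] d0 X2(3,4) by (simp add: sp_def d_def)
  have l4: "dlink VV hp w (cf (Prp x1) 0 X2 Y2 h2) (cf (Chk x1) 0 (tv 0 0) Y2 (hx hp w h2))"
    using st_Prp[where q=q and sp=sp and d=d and par=par and st="tS w t" and w=w and P=hp and h=h2 and p=0 and X=X2 and Y=Y2] g1 E
    by (simp add: x1_def)
  have dp: "dpath VV hp w ((K - 0) * Pp w + (1 + ((K - 0) * Pp w + 1)))
       (cf (gst w t) 0 X Y h) (cf (Chk x1) 0 (tv 0 0) Y2 (hx hp w h2))"
    unfolding gs by (intro dpath_trans[OF s1(6)] dpath_trans[OF dpath_one[OF l2]] dpath_trans[OF s3(6)] dpath_one[OF l4])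
  have ceq: "(K - 0) * Pp w + (1 + ((K - 0) * Pp w + 1)) = CC w - 1" by (simp add: CC_def)
  have lh: "length (hx hp w h2) = Pp w + t * CC w + (CC w - 1)" using s3(1) by (simp add: L0_def CC_def)
  have dp': "dpath VV hp w (CC w - 1) (cf (gst w t) 0 X Y h)
        (cf (Chk (Ctx (Qs M w t) (fst (pend w t)) (snd (pend w t)) (t mod 2) (tS w t))) 0 (tv 0 0) Y2 (hx hp w h2))"
    using dp[unfolded ceq] by (simp add: x1_def q_def sp_def d_def par_def)
  show ?thesis using dp' lh Y2 by blast
qed

end

context vcs begin

lemma CC_pos: "1 \<le> CC w" by (simp add: CC_def)

lemma path_c:
  assumes TN: "\<forall>t'<T. Qs M w t' \<notin> {tm_acc M, tm_rej M}"
  shows "t \<le> T \<Longrightarrow> \<exists>X Y h. goodXY w t X Y \<and> length h = Pp w + t * CC w \<and>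
     dpath VV hp w (Pp w + t * CC w) (start VV) (cf (gst w t) 0 X Y h)"
proof (induction t)
  case 0
  obtain X h where "length h = 2 * length w + 3" "goodXY w 0 X (\<lambda>_. 0)"
     "dpath VV hp w (2 * length w + 3) (start VV) (cf (gst w 0) 0 X (\<lambda>_. 0) h)"
    using init_run[of w hp] by blast
  then show ?case unfolding Pp_def by auto
next
  case (Suc t)
  then have tT: "t < T" by simp
  obtain X Y h where a: "goodXY w t X Y" "length h = Pp w + t * CC w"
    "dpath VV hp w (Pp w + t * CC w) (start VV) (cf (gst w t) 0 X Y h)" using Suc tT by auto
  have nh: "t = 0 \<or> Qs M w (t - 1) \<notin> {tm_acc M, tm_rej M}" using TN tT by auto
  obtain Y2 h2 where b: "length h2 = Pp w + t * CC w + (CC w - 1)"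
     "dpath VV hp w (CC w - 1) (cf (gst w t) 0 X Y h)
        (cf (Chk (Ctx (Qs M w t) (fst (pend w t)) (snd (pend w t)) (t mod 2) (tS w t))) 0 (tv 0 0) Y2 h2)"
     "Y2 1 = tL w t" "Y2 2 = tR w t" "Y2 3 = 0" "Y2 4 = 0"
    using round_c[OF nh a(1,2)] by blast
  have gc: "goodctx (Ctx (Qs M w t) (fst (pend w t)) (snd (pend w t)) (t mod 2) (tS w t))"
    using gctx tS_lt by blast
  have nht: "Qs M w t \<notin> {tm_acc M, tm_rej M}" using TN tT by blast
  obtain q' s' d' where dl: "tm_delta M (Qs M w t) (tS w t) = (q', s', d')" by (metis prod_cases3)
  have l: "dlink VV hp w (cf (Chk (Ctx (Qs M w t) (fst (pend w t)) (snd (pend w t)) (t mod 2) (tS w t))) 0 (tv 0 0) Y2 h2)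
      (cf (Str False 0 False (Ctx q' s' (dcode d') (1 - t mod 2) 0)) 0 Y2 (\<lambda>_. 0) (hx hp w h2))"
    by (rule chk_ok_cont[OF gc _ _ dl]) (use nht in auto)
  have dl': "tm_delta M (Qs M w t) (Ts M w t (Hs M w t)) = (q', s', d')" using dl by (simp add: tS_def)
  have gs: "gst w (Suc t) = Str False 0 False (Ctx q' s' (dcode d') (1 - t mod 2) 0)"
    using step_nothalt(1)[OF nht dl'] dl by (simp add: gst_def pend_def mod2_suc)
  have cnt: "Pp w + t * CC w + (CC w - 1 + 1) = Pp w + Suc t * CC w" using CC_pos[of w] by simp
  have dp: "dpath VV hp w (Pp w + Suc t * CC w) (start VV) (cf (gst w (Suc t)) 0 Y2 (\<lambda>_. 0) (hx hp w h2))"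
    using dpath_trans[OF a(3) dpath_trans[OF b(2) dpath_one[OF l]]] unfolding gs cnt[symmetric] by (simp add: add.assoc)
  have "goodXY w (Suc t) Y2 (\<lambda>_. 0)" using b(3-6) by (simp add: goodXY_def)
  moreover have "length (hx hp w h2) = Pp w + Suc t * CC w" using b(1) CC_pos[of w] by simp
  ultimately show ?case using dp by blast
qed

lemma complete_main:
  assumes TA: "Qs M w T = tm_acc M" and TN: "\<forall>t'<T. Qs M w t' \<notin> {tm_acc M, tm_rej M}"
  defines "N' \<equiv> Pp w + T * CC w + (CC w - 1)"
  shows "reach VV (v_acc VV) hp w n (start VV) = (if N' < n then 1 else 0)"
    "reach VV (v_rej VV) hp w n (start VV) = 0"
proof -
  obtain X Y h where a: "goodXY w T X Y" "length h = Pp w + T * CC w"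
    "dpath VV hp w (Pp w + T * CC w) (start VV) (cf (gst w T) 0 X Y h)" using path_c[OF TN, of T] by auto
  have nh: "T = 0 \<or> Qs M w (T - 1) \<notin> {tm_acc M, tm_rej M}" using TN by auto
  obtain Y2 h2 where b:
     "dpath VV hp w (CC w - 1) (cf (gst w T) 0 X Y h)
        (cf (Chk (Ctx (Qs M w T) (fst (pend w T)) (snd (pend w T)) (T mod 2) (tS w T))) 0 (tv 0 0) Y2 h2)"
    using round_c[OF nh a(1,2)] by blast
  let ?cc = "cf (Chk (Ctx (Qs M w T) (fst (pend w T)) (snd (pend w T)) (T mod 2) (tS w T))) 0 (tv 0 0) Y2 h2"
  have dp: "dpath VV hp w N' (start VV) ?cc" unfolding N'_def by (rule dpath_trans[OF a(3) b])
  have gc0: "goodctx (Ctx (Qs M w T) (fst (pend w T)) (snd (pend w T)) (T mod 2) (tS w T))"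
    using gctx tS_lt by blast
  have gc: "goodctx (Ctx (tm_acc M) (fst (pend w T)) (snd (pend w T)) (T mod 2) (tS w T))"
    using gc0 unfolding TA .
  have acc1: "reach VV (v_acc VV) hp w (Suc m) ?cc = 1" and rej0: "reach VV (v_rej VV) hp w (Suc m) ?cc = 0" for m
    using chk_ok_acc[OF gc] TA by simp_all
  have vcc: "validst (Chk (Ctx (Qs M w T) (fst (pend w T)) (snd (pend w T)) (T mod 2) (tS w T)))"
    using goodctx_valid(3) gctx tS_lt by blast
  have nhcc: "fst ?cc \<notin> v_acc VV \<union> v_rej VV" using nothalt_enc[OF vcc] by (simp add: cf_def)
  have gen: "reach VV S hp w n (start VV) = (if N' < n then reach VV S hp w (n - N') ?cc else 0)" if S: "hs VV S" for S
  proof (cases "N' < n")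
    case True
    have "reach VV S hp w ((n - N') + N') (start VV) = reach VV S hp w (n - N') ?cc" by (rule dpath_reach[OF dp S])
    then show ?thesis using True by simp
  next
    case False
    show ?thesis
    proof (cases "n = N'")
      case True
      have "reach VV S hp w (0 + N') (start VV) = reach VV S hp w 0 ?cc" by (rule dpath_reach[OF dp S])
      then show ?thesis using True reach0_nothalt[OF nhcc S] by simp
    next
      case False
      then have "n < N'" using \<open>\<not> N' < n\<close> by simp
      then show ?thesis using dpath_reach_lt[OF dp S] by simp
    qed
  qed
  show "reach VV (v_acc VV) hp w n (start VV) = (if N' < n then 1 else 0)"
  proof (cases "N' < n")
    case True
    then have "n - N' = Suc (n - Suc N')" by simp
    then obtain m where "n - N' = Suc m" by blast
    then show ?thesis using gen[of "v_acc VV"] True acc1 by (simp add: hs_def)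
  qed (use gen[of "v_acc VV"] in \<open>simp add: hs_def\<close>)
  show "reach VV (v_rej VV) hp w n (start VV) = 0"
  proof (cases "N' < n")
    case True
    then have "n - N' = Suc (n - Suc N')" by simp
    then obtain m where "n - N' = Suc m" by blast
    then show ?thesis using gen[of "v_rej VV"] True rej0 by (simp add: hs_def)
  qed (use gen[of "v_rej VV"] in \<open>simp add: hs_def\<close>)
qed

lemma complete_probs:
  assumes TA: "Qs M w T = tm_acc M" and TN: "\<forall>t'<T. Qs M w t' \<notin> {tm_acc M, tm_rej M}"
  shows "acc_prob VV hp w = 1" "exp_time_le VV hp w (real (Pp w + Suc T * CC w))"
proof -
  define N' where "N' = Pp w + T * CC w + (CC w - 1)"
  have ra: "reach VV (v_acc VV) hp w n (start VV) = (if N' < n then 1 else 0)" for n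
    using complete_main(1)[OF TA TN] by (simp add: N'_def)
  have rr: "reach VV (v_rej VV) hp w n (start VV) = 0" for n using complete_main(2)[OF TA TN] .
  show "acc_prob VV hp w = 1"
    unfolding acc_prob_def
  proof (rule antisym)
    show "(SUP n. reach VV (v_acc VV) hp w n (start VV)) \<le> 1"
      by (rule cSUP_least) (auto simp: ra)
    have "reach VV (v_acc VV) hp w (Suc N') (start VV) \<le> (SUP n. reach VV (v_acc VV) hp w n (start VV))"
      by (rule cSUP_upper[OF _ bdd_reach]) simp
    then show "1 \<le> (SUP n. reach VV (v_acc VV) hp w n (start VV))" by (simp add: ra)
  qed
  let ?f = "\<lambda>n. 1 - (reach VV (v_acc VV) hp w n (start VV) + reach VV (v_rej VV) hp w n (start VV))"
  have f: "?f n = (if n < Suc N' then 1 else 0)" for n by (simp add: ra rr)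
  have z: "?f n = 0" if "n \<notin> {..<Suc N'}" for n using that f by simp
  have "summable ?f" by (rule summable_finite[of "{..<Suc N'}"]) (use z in auto)
  moreover have "suminf ?f = real (Suc N')"
  proof -
    have "suminf ?f = (\<Sum>n\<in>{..<Suc N'}. ?f n)" by (rule suminf_finite) (use z in auto)
    also have "\<dots> = (\<Sum>n\<in>{..<Suc N'}. 1)" by (rule sum.cong) (auto simp: f)
    finally show ?thesis by simp
  qed
  moreover have "Suc N' = Pp w + Suc T * CC w" using CC_pos[of w] by (simp add: N'_def)
  ultimately show "exp_time_le VV hp w (real (Pp w + Suc T * CC w))"
    unfolding exp_time_le_def Let_def by simp
qed

end

lemma halted_iff: "tm_halted M w n \<longleftrightarrow> Qs M w n \<in> {tm_acc M, tm_rej M}"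
  by (simp add: tm_halted_def Qs_def)

lemma time_facts:
  assumes dec: "tm_decides M L"
  shows "Qs M w (tm_time M w) \<in> {tm_acc M, tm_rej M}"
    "\<forall>t < tm_time M w. Qs M w t \<notin> {tm_acc M, tm_rej M}"
    "Qs M w (tm_time M w) = tm_acc M \<longleftrightarrow> w \<in> L"
proof -
  obtain n where n: "tm_halted M w n" "fst (tm_conf M w n) = tm_acc M \<longleftrightarrow> w \<in> L"
    using dec unfolding tm_decides_def by blast
  have h: "tm_halted M w (tm_time M w)" unfolding tm_time_def by (rule LeastI[of _ n]) (rule n(1))
  then show q: "Qs M w (tm_time M w) \<in> {tm_acc M, tm_rej M}" by (simp add: halted_iff)
  show "\<forall>t < tm_time M w. Qs M w t \<notin> {tm_acc M, tm_rej M}"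
    unfolding tm_time_def using not_less_Least halted_iff by blast
  have le: "tm_time M w \<le> n" unfolding tm_time_def by (rule Least_le) (rule n(1))
  have "tm_conf M w n = tm_conf M w (tm_time M w)" by (rule halt_stays[OF q le])
  then show "Qs M w (tm_time M w) = tm_acc M \<longleftrightarrow> w \<in> L" using n(2) by (simp add: Qs_def)
qed

lemma exp_time_mono: "exp_time_le V P w B \<Longrightarrow> B \<le> B' \<Longrightarrow> exp_time_le V P w B'"
  unfolding exp_time_le_def Let_def by auto

context vcs begin
lemma valid_hp: "valid_prover VV hp" by (simp add: valid_prover_def VV_def hp_def hmsg_lt)
lemma CC_eq: "CC w = 4 * K * length w + 6 * K + 3" by (simp add: CC_def Pp_def algebra_simps)
lemma Pp_eq: "Pp w = 2 * length w + 3" by (simp add: Pp_def)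
end

definition Vt :: "bool \<Rightarrow> 'a verifier" where
  "Vt b = \<lparr> v_nst = 1, v_nmsg = 1, v_q0 = 0, v_acc = (if b then {0} else {}), v_rej = (if b then {} else {0}),
     v_nreg = 0, v_rdim = (\<lambda>_. 1), v_act = (\<lambda>_ _ _ _. None), v_trans = (\<lambda>_ _ _ _. (0, 0)) \<rparr>"

lemma Vt_wf: "wf_verifier (Vt b)" and Vt_rat: "rational_verifier (Vt b)"
  by (auto simp: wf_verifier_def rational_verifier_def Vt_def)

lemma Vt_reach: "reach (Vt b) S P w n (start (Vt b)) = (if 0 \<in> S then 1 else 0)"
  by (cases n) (auto simp: start_def Vt_def)

lemma SUP_const_real: "(SUP n::nat. (c::real)) = c" by simp

lemma main:
  fixes M :: "'a dtm"
  assumes wf: "wf_dtm M" and dec: "tm_decides M L" and lsp: "tm_linear_space M"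
  shows "\<exists>V P. wf_verifier V \<and> rational_verifier V \<and> valid_prover V P \<and> sound V L (1/3) \<and>
     (\<forall>w\<in>L. acc_prob V P w = 1) \<and>
     (\<exists>k::real. 0 \<le> k \<and> (\<forall>w\<in>L. 1 \<le> length w \<longrightarrow> exp_time_le V P w (k * real (length w) * real (tm_time M w))))"
proof (cases "tm_q0 M \<in> {tm_acc M, tm_rej M}")
  case True
  interpret tmw M by (rule tmw.intro[OF wf])
  have q0: "Qs M w 0 = tm_q0 M" for w by (rule init_vals(1))
  have tt: "tm_time M w = 0" for w
    unfolding tm_time_def using True q0 halted_iff by (metis (no_types, lifting) Least_eq_0)
  have inL: "w \<in> L \<longleftrightarrow> tm_q0 M = tm_acc M" for w
    using time_facts(3)[OF dec, of w] tt q0 by simp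
  let ?b = "tm_q0 M = tm_acc M"
  let ?P = "\<lambda>(_::'a list) (_::hist). 0::nat"
  let ?V = "Vt ?b :: 'a verifier"
  have vp: "valid_prover ?V ?P" by (simp add: valid_prover_def Vt_def)
  have snd: "sound ?V L (1/3)"
    unfolding sound_def rej_prob_def
  proof (intro allI impI)
    fix w P assume "w \<notin> L" "valid_prover ?V P"
    then have "\<not> ?b" using inL by blast
    then show "1 - 1/3 \<le> (SUP n. reach ?V (v_rej ?V) P w n (start ?V))"
      by (simp add: Vt_reach) (simp add: Vt_def)
  qed
  have acc: "\<forall>w\<in>L. acc_prob ?V ?P w = 1"
  proof
    fix w assume "w \<in> L"
    then have ?b using inL by blast
    then show "acc_prob ?V ?P w = 1" unfolding acc_prob_def by (simp add: Vt_reach) (simp add: Vt_def)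
  qed
  have tim: "\<forall>w\<in>L. 1 \<le> length w \<longrightarrow> exp_time_le ?V ?P w (0 * real (length w) * real (tm_time M w))"
  proof (intro ballI impI)
    fix w assume "w \<in> L"
    then have b: ?b using inL by blast
    have "(\<lambda>n. 1 - (reach ?V (v_acc ?V) ?P w n (start ?V) + reach ?V (v_rej ?V) ?P w n (start ?V))) = (\<lambda>_. 0)"
      using b by (simp add: Vt_reach) (simp add: Vt_def)
    then show "exp_time_le ?V ?P w (0 * real (length w) * real (tm_time M w))"
      unfolding exp_time_le_def Let_def by simp
  qed
  show ?thesis using Vt_wf Vt_rat vp snd acc tim by blast
next
  case False
  obtain cs where cs: "\<forall>w n. \<bar>snd (snd (tm_conf M w n))\<bar> \<le> int cs * (int (length w) + 1)"
    using lsp unfolding tm_linear_space_def by blast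
  interpret I: vcs M "2 * cs + 2" cs
    by unfold_locales (use wf cs in \<open>auto simp: Hs_def\<close>)
  have vp: "valid_prover I.VV I.hp" by (rule I.valid_hp)
  have snd: "sound I.VV L (1/3)"
    unfolding sound_def
  proof (intro allI impI)
    fix w P assume "w \<notin> L" "valid_prover I.VV P"
    then have TR: "Qs M w (tm_time M w) = tm_rej M" using time_facts[OF dec, of w] by auto
    show "1 - 1/3 \<le> rej_prob I.VV P w" using I.rej_prob_ge[OF TR time_facts(2)[OF dec]] by simp
  qed
  have acc: "\<forall>w\<in>L. acc_prob I.VV I.hp w = 1"
  proof
    fix w assume "w \<in> L"
    then have TA: "Qs M w (tm_time M w) = tm_acc M" using time_facts[OF dec, of w] by auto
    show "acc_prob I.VV I.hp w = 1" by (rule I.complete_probs(1)[OF TA time_facts(2)[OF dec]])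
  qed
  define K where "K = 2 * cs + 2"
  have tim: "\<forall>w\<in>L. 1 \<le> length w \<longrightarrow> exp_time_le I.VV I.hp w (real (20 * K + 11) * real (length w) * real (tm_time M w))"
  proof (intro ballI impI)
    fix w assume wL: "w \<in> L" and n1: "1 \<le> length w"
    then have TA: "Qs M w (tm_time M w) = tm_acc M" using time_facts[OF dec, of w] by auto
    let ?T = "tm_time M w" and ?n = "length w"
    have T1: "1 \<le> ?T"
    proof (rule ccontr)
      assume "\<not> 1 \<le> ?T"
      then have "?T = 0" by simp
      then show False using time_facts(1)[OF dec, of w] I.init_vals(1) False by simp
    qed
    have e: "exp_time_le I.VV I.hp w (real (I.Pp w + Suc ?T * I.CC w))"
      by (rule I.complete_probs(2)[OF TA time_facts(2)[OF dec]])
    have b1: "I.Pp w \<le> 5 * ?n * ?T"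
    proof -
      have "I.Pp w \<le> 5 * ?n" using n1 unfolding I.Pp_eq by simp
      also have "\<dots> = 5 * ?n * 1" by simp
      also have "\<dots> \<le> 5 * ?n * ?T" using T1 by (intro mult_left_mono) auto
      finally show ?thesis .
    qed
    have b2: "I.CC w \<le> (10 * K + 3) * ?n"
    proof -
      have "I.CC w = 4 * K * ?n + 6 * K + 3" unfolding K_def by (rule I.CC_eq)
      also have "\<dots> \<le> 4 * K * ?n + 6 * K * ?n + 3 * ?n" using n1 by (intro add_mono) auto
      also have "\<dots> = (10 * K + 3) * ?n" by (simp add: algebra_simps)
      finally show ?thesis .
    qed
    have b3: "Suc ?T * I.CC w \<le> (2 * ?T) * ((10 * K + 3) * ?n)"
      using T1 b2 by (intro mult_le_mono) auto
    have "I.Pp w + Suc ?T * I.CC w \<le> 5 * ?n * ?T + (2 * ?T) * ((10 * K + 3) * ?n)" using b1 b3 by linarith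
    also have "\<dots> = (20 * K + 11) * ?n * ?T" by (simp add: algebra_simps)
    finally have "real (I.Pp w + Suc ?T * I.CC w) \<le> real ((20 * K + 11) * ?n * ?T)" by (simp only: of_nat_le_iff)
    then have "real (I.Pp w + Suc ?T * I.CC w) \<le> real (20 * K + 11) * real ?n * real ?T" by simp
    then show "exp_time_le I.VV I.hp w (real (20 * K + 11) * real (length w) * real (tm_time M w))"
      using exp_time_mono[OF e] by blast
  qed
  show ?thesis
    using I.wf_VV I.rat_VV vp snd acc tim by (intro exI[of _ I.VV] exI[of _ I.hp]) (auto intro!: exI[of _ "real (20 * K + 11)"])
qed

theorem corollary1:
  shows "DSPACE_lin \<subseteq> (AM_q_1_2ADfA :: ('a::finite) list set set) \<and>
    (\<forall>(L :: 'a list set) (t :: nat \<Rightarrow> nat).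
       (\<exists>M. wf_dtm M \<and> tm_decides M L \<and> tm_linear_space M \<and>
          (\<exists>c N. \<forall>w. N \<le> length w \<longrightarrow> real (tm_time M w) \<le> c * real (t (length w))))
       \<longrightarrow> (\<exists>V \<epsilon>. wf_verifier V \<and> rational_verifier V \<and> \<epsilon> < 1/2 \<and>
             (\<exists>P. valid_prover V P \<and> (\<forall>w\<in>L. acc_prob V P w \<ge> 1 - \<epsilon>) \<and>
                (\<exists>c N. \<forall>w\<in>L. N \<le> length w \<longrightarrow>
                   exp_time_le V P w (c * real (length w) * real (t (length w))))) \<and>
             sound V L \<epsilon>))"
proof (intro conjI allI impI)
  show "DSPACE_lin \<subseteq> (AM_q_1_2ADfA :: ('a::finite) list set set)"
  proof
    fix L :: "'a list set" assume "L \<in> DSPACE_lin"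
    then obtain M where M: "wf_dtm M" "tm_decides M L" "tm_linear_space M" unfolding DSPACE_lin_def by blast
    obtain V P where V: "wf_verifier V" "rational_verifier V" "valid_prover V P" "sound V L (1/3)"
      "\<forall>w\<in>L. acc_prob V P w = 1" using main[OF M] by blast
    show "L \<in> AM_q_1_2ADfA" unfolding AM_q_1_2ADfA_def
      using V by (intro CollectI exI[of _ V] exI[of _ "1/3::real"]) auto
  qed
next
  fix L :: "'a list set" and t :: "nat \<Rightarrow> nat"
  assume "\<exists>M. wf_dtm M \<and> tm_decides M L \<and> tm_linear_space M \<and>
          (\<exists>c N. \<forall>w. N \<le> length w \<longrightarrow> real (tm_time M w) \<le> c * real (t (length w)))"
  then obtain M c N where M: "wf_dtm M" "tm_decides M L" "tm_linear_space M"
    and tb: "\<forall>w. N \<le> length w \<longrightarrow> real (tm_time M w) \<le> c * real (t (length w))" by blast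
  obtain V P k where V: "wf_verifier V" "rational_verifier V" "valid_prover V P" "sound V L (1/3)"
      "\<forall>w\<in>L. acc_prob V P w = 1" "0 \<le> k"
      "\<forall>w\<in>L. 1 \<le> length w \<longrightarrow> exp_time_le V P w (k * real (length w) * real (tm_time M w))"
    using main[OF M] by blast
  have tim: "\<forall>w\<in>L. max N 1 \<le> length w \<longrightarrow> exp_time_le V P w ((k * c) * real (length w) * real (t (length w)))"
  proof (intro ballI impI)
    fix w assume wL: "w \<in> L" and le: "max N 1 \<le> length w"
    have e: "exp_time_le V P w (k * real (length w) * real (tm_time M w))" using V(7) wL le by auto
    have "real (tm_time M w) \<le> c * real (t (length w))" using tb le by auto
    then have "k * real (length w) * real (tm_time M w) \<le> k * real (length w) * (c * real (t (length w)))"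
      using V(6) by (intro mult_left_mono) auto
    also have "\<dots> = (k * c) * real (length w) * real (t (length w))" by (simp add: algebra_simps)
    finally show "exp_time_le V P w ((k * c) * real (length w) * real (t (length w)))" by (rule exp_time_mono[OF e])
  qed
  show "\<exists>V \<epsilon>. wf_verifier V \<and> rational_verifier V \<and> \<epsilon> < 1/2 \<and>
             (\<exists>P. valid_prover V P \<and> (\<forall>w\<in>L. acc_prob V P w \<ge> 1 - \<epsilon>) \<and>
                (\<exists>c N. \<forall>w\<in>L. N \<le> length w \<longrightarrow>
                   exp_time_le V P w (c * real (length w) * real (t (length w))))) \<and>
             sound V L \<epsilon>"
  proof (intro exI[of _ V] exI[of _ "1/3::real"] conjI)
    show "wf_verifier V" "rational_verifier V" "sound V L (1/3)" using V by auto
    show "(1/3::real) < 1/2" by simp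
    have acc: "\<forall>w\<in>L. acc_prob V P w \<ge> 1 - 1/3" using V(5) by simp
    have ex: "\<exists>c N. \<forall>w\<in>L. N \<le> length w \<longrightarrow> exp_time_le V P w (c * real (length w) * real (t (length w)))"
      using tim by blast
    show "\<exists>P. valid_prover V P \<and> (\<forall>w\<in>L. acc_prob V P w \<ge> 1 - 1/3) \<and>
                (\<exists>c N. \<forall>w\<in>L. N \<le> length w \<longrightarrow>
                   exp_time_le V P w (c * real (length w) * real (t (length w))))"
      using V(3) acc ex by blast
  qed
qed

end
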